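(* Composites of admissible morphisms of quasi-schemoids are admissible, so finite basic quasi-schemoids and admissible morphisms form a category $\mathcal B$; and the assignments $(\mathcal C,S)\mapsto\mathbb K(\mathcal C,S)$, $\phi\mapsto\mathbb K(\phi)$ (with $\mathbb K(\phi)(s_\pi)=n^\phi_\pi s_{\phi(\pi)}$) define a functor $\mathbb K(-):\mathcal B\to\mathbf{Alg}$ to the category of (possibly nonunital) $\mathbb K$-algebras.
   Context: Write $s(f),t(f)$ for source and target. A quasi-schemoid is a pair $(\mathcal C,S)$ with $\mathcal C$ a small category and $S$ a partition of $mor(\mathcal C)$ into nonempty blocks such that for all $\sigma,\tau,\mu\in S$ and $f,g\in\mu$ the sets $\{(a,b)\in\sigma\times\tau: s(a)=t(b), a\circ b=f\}$ and the analogous set for $g$ have equal cardinality. It is finite if $mor(\mathcal C)$ is finite; unital if every block meeting $\{1_x\}$ is contained in it; basic if unital and $\mathcal C$ is a groupoid. A morphism of quasi-schemoids $\phi$ is a functor such that each $\phi(\sigma)$ lies in a unique block of the target, also denoted $\phi(\sigma)$; it is admissible if for every $x\in ob(\mathcal C)$, $\sigma\in S$ and $g\in\phi(\sigma)$ with $t(g)=\phi(x)$ there exists $f\in\sigma$ with $t(f)=x$ and $\phi(f)=g$. For admissible $\phi$ between finite basic quasi-schemoids, $n^\phi_\sigma$ denotes the positive integer with $\#(\phi^{-1}(g)\cap\{f\in\sigma:t(f)=x\})=n^\phi_\sigma$ for all $x$ and all $g\in\phi(\sigma)$ with $t(g)=\phi(x)$. $\mathbb K$ is a commutative ring with unit;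 the category algebra $\mathbb K\mathcal C$ is the free $\mathbb K$-module on $mor(\mathcal C)$ with product $a\cdot b=a\circ b$ if composable and $0$ otherwise; $s_\sigma=\sum_{f\in\sigma}f$; the schemoid algebra $\mathbb K(\mathcal C,S)$ is the subalgebra spanned by the $s_\sigma$; $\mathbb K(\phi)$ is extended $\mathbb K$-linearly. *)

theory Defs
  imports Main "HOL-Library.Equipollence"
begin

record ('o, 'm) cat =
  Obj :: "'o set"
  Mor :: "'m set"
  Dom :: "'m \<Rightarrow> 'o"
  Cod :: "'m \<Rightarrow> 'o"
  Id :: "'o \<Rightarrow> 'm"
  Comp :: "'m \<Rightarrow> 'm \<Rightarrow> 'm"

definition category :: "('o, 'm) cat \<Rightarrow> bool" where
  "category C \<longleftrightarrow>
     (\<forall>f\<in>Mor C. Dom C f \<in> Obj C \<and> Cod C f \<in> Obj C) \<and>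
     (\<forall>x\<in>Obj C. Id C x \<in> Mor C \<and> Dom C (Id C x) = x \<and> Cod C (Id C x) = x) \<and>
     (\<forall>f\<in>Mor C. \<forall>g\<in>Mor C. Dom C g = Cod C f \<longrightarrow>
        Comp C g f \<in> Mor C \<and> Dom C (Comp C g f) = Dom C f \<and> Cod C (Comp C g f) = Cod C g) \<and>
     (\<forall>f\<in>Mor C. Comp C (Id C (Cod C f)) f = f \<and> Comp C f (Id C (Dom C f)) = f) \<and>
     (\<forall>f\<in>Mor C. \<forall>g\<in>Mor C. \<forall>h\<in>Mor C. Dom C h = Cod C g \<longrightarrow> Dom C g = Cod C f \<longrightarrow>
        Comp C h (Comp C g f) = Comp C (Comp C h g) f)"

definition groupoid :: "('o, 'm) cat \<Rightarrow> bool" where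
  "groupoid C \<longleftrightarrow> category C \<and>
     (\<forall>f\<in>Mor C. \<exists>g\<in>Mor C. Dom C g = Cod C f \<and> Cod C g = Dom C f \<and>
        Comp C g f = Id C (Dom C f) \<and> Comp C f g = Id C (Cod C f))"

definition factor_pairs :: "('o, 'm) cat \<Rightarrow> 'm set \<Rightarrow> 'm set \<Rightarrow> 'm \<Rightarrow> ('m \<times> 'm) set" where
  "factor_pairs C \<sigma> \<tau> f = {(a, b). a \<in> \<sigma> \<and> b \<in> \<tau> \<and> Dom C a = Cod C b \<and> Comp C a b = f}"

definition quasi_schemoid :: "('o, 'm) cat \<Rightarrow> 'm set set \<Rightarrow> bool" where
  "quasi_schemoid C S \<longleftrightarrow> category C \<and>
     (\<forall>\<sigma>\<in>S. \<sigma> \<noteq> {}) \<and> \<Union>S = Mor C \<and>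
     (\<forall>\<sigma>\<in>S. \<forall>\<tau>\<in>S. \<sigma> \<noteq> \<tau> \<longrightarrow> \<sigma> \<inter> \<tau> = {}) \<and>
     (\<forall>\<sigma>\<in>S. \<forall>\<tau>\<in>S. \<forall>\<mu>\<in>S. \<forall>f\<in>\<mu>. \<forall>g\<in>\<mu>.
        factor_pairs C \<sigma> \<tau> f \<approx> factor_pairs C \<sigma> \<tau> g)"

definition finite_qs :: "('o, 'm) cat \<Rightarrow> 'm set set \<Rightarrow> bool" where
  "finite_qs C S \<longleftrightarrow> quasi_schemoid C S \<and> finite (Mor C)"

definition unital :: "('o, 'm) cat \<Rightarrow> 'm set set \<Rightarrow> bool" where
  "unital C S \<longleftrightarrow> quasi_schemoid C S \<and>
     (\<forall>\<sigma>\<in>S. \<sigma> \<inter> Id C ` Obj C \<noteq> {} \<longrightarrow> \<sigma> \<subseteq> Id C ` Obj C)"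

definition basic :: "('o, 'm) cat \<Rightarrow> 'm set set \<Rightarrow> bool" where
  "basic C S \<longleftrightarrow> unital C S \<and> groupoid C"

definition finite_basic :: "('o, 'm) cat \<Rightarrow> 'm set set \<Rightarrow> bool" where
  "finite_basic C S \<longleftrightarrow> finite_qs C S \<and> basic C S"

definition is_functor :: "('o1, 'm1) cat \<Rightarrow> ('o2, 'm2) cat \<Rightarrow> ('o1 \<Rightarrow> 'o2) \<Rightarrow> ('m1 \<Rightarrow> 'm2) \<Rightarrow> bool" where
  "is_functor C D Fo Fm \<longleftrightarrow> category C \<and> category D \<and>
     (\<forall>x\<in>Obj C. Fo x \<in> Obj D) \<and>
     (\<forall>f\<in>Mor C. Fm f \<in> Mor D \<and> Dom D (Fm f) = Fo (Dom C f) \<and> Cod D (Fm f) = Fo (Cod C f)) \<and>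
     (\<forall>x\<in>Obj C. Fm (Id C x) = Id D (Fo x)) \<and>
     (\<forall>f\<in>Mor C. \<forall>g\<in>Mor C. Dom C g = Cod C f \<longrightarrow> Fm (Comp C g f) = Comp D (Fm g) (Fm f))"

definition qs_morphism ::
  "('o1, 'm1) cat \<Rightarrow> 'm1 set set \<Rightarrow> ('o2, 'm2) cat \<Rightarrow> 'm2 set set \<Rightarrow> ('o1 \<Rightarrow> 'o2) \<Rightarrow> ('m1 \<Rightarrow> 'm2) \<Rightarrow> bool" where
  "qs_morphism C S D T Fo Fm \<longleftrightarrow> quasi_schemoid C S \<and> quasi_schemoid D T \<and> is_functor C D Fo Fm \<and>
     (\<forall>\<sigma>\<in>S. \<exists>!\<tau>. \<tau> \<in> T \<and> Fm ` \<sigma> \<subseteq> \<tau>)"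

definition blk :: "'m2 set set \<Rightarrow> ('m1 \<Rightarrow> 'm2) \<Rightarrow> 'm1 set \<Rightarrow> 'm2 set" where
  "blk T Fm \<sigma> = (THE \<tau>. \<tau> \<in> T \<and> Fm ` \<sigma> \<subseteq> \<tau>)"

definition admissible ::
  "('o1, 'm1) cat \<Rightarrow> 'm1 set set \<Rightarrow> ('o2, 'm2) cat \<Rightarrow> 'm2 set set \<Rightarrow> ('o1 \<Rightarrow> 'o2) \<Rightarrow> ('m1 \<Rightarrow> 'm2) \<Rightarrow> bool" where
  "admissible C S D T Fo Fm \<longleftrightarrow> qs_morphism C S D T Fo Fm \<and>
     (\<forall>x\<in>Obj C. \<forall>\<sigma>\<in>S. \<forall>g\<in>blk T Fm \<sigma>. Cod D g = Fo x \<longrightarrow>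
        (\<exists>f\<in>\<sigma>. Cod C f = x \<and> Fm f = g))"

definition nphi ::
  "('o1, 'm1) cat \<Rightarrow> ('o2, 'm2) cat \<Rightarrow> 'm2 set set \<Rightarrow> ('o1 \<Rightarrow> 'o2) \<Rightarrow> ('m1 \<Rightarrow> 'm2) \<Rightarrow> 'm1 set \<Rightarrow> nat" where
  "nphi C D T Fo Fm \<sigma> = (SOME n. n > 0 \<and>
     (\<forall>x\<in>Obj C. \<forall>g\<in>blk T Fm \<sigma>. Cod D g = Fo x \<longrightarrow>
        card {f \<in> \<sigma>. Cod C f = x \<and> Fm f = g} = n))"

text \<open>Elements of the category algebra of a finite category are functions Mor C to K
(vanishing outside Mor C); the product is the convolution a . b = sum of a(f) b(g) (f o g).\<close>
definition cat_mult :: "('o, 'm) cat \<Rightarrow> ('m \<Rightarrow> 'k::comm_ring_1) \<Rightarrow> ('m \<Rightarrow> 'k) \<Rightarrow> ('m \<Rightarrow> 'k)" where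
  "cat_mult C a b = (\<lambda>h. \<Sum>(f, g) \<in> {(f, g). f \<in> Mor C \<and> g \<in> Mor C \<and> Dom C f = Cod C g \<and> Comp C f g = h}.
      a f * b g)"

text \<open>s_sigma = sum of the morphisms in sigma.\<close>
definition sblock :: "'m set \<Rightarrow> ('m \<Rightarrow> 'k::comm_ring_1)" where
  "sblock \<sigma> = (\<lambda>h. if h \<in> \<sigma> then 1 else 0)"

definition sch_alg :: "('o, 'm) cat \<Rightarrow> 'm set set \<Rightarrow> ('m \<Rightarrow> 'k::comm_ring_1) set" where
  "sch_alg C S = {a. \<exists>c :: 'm set \<Rightarrow> 'k. a = (\<lambda>h. \<Sum>\<sigma>\<in>S. c \<sigma> * sblock \<sigma> h)}"

text \<open>K(phi): the K-linear map on the schemoid algebra with s_pi |-> n^phi_pi s_phi(pi).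
The coefficient of s_sigma in a is the value of a at any morphism of sigma.\<close>
definition Kmap ::
  "('o1, 'm1) cat \<Rightarrow> 'm1 set set \<Rightarrow> ('o2, 'm2) cat \<Rightarrow> 'm2 set set \<Rightarrow> ('o1 \<Rightarrow> 'o2) \<Rightarrow> ('m1 \<Rightarrow> 'm2)
     \<Rightarrow> ('m1 \<Rightarrow> 'k::comm_ring_1) \<Rightarrow> ('m2 \<Rightarrow> 'k)" where
  "Kmap C S D T Fo Fm a = (\<lambda>g. \<Sum>\<sigma>\<in>S.
      if g \<in> blk T Fm \<sigma> then of_nat (nphi C D T Fo Fm \<sigma>) * a (SOME f. f \<in> \<sigma>) else 0)"

end

theory Submission
  imports Defs
begin

lemma cat_D:
  assumes "category C"
  shows "\<forall>f\<in>Mor C. Dom C f \<in> Obj C \<and> Cod C f \<in> Obj C"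
    "\<forall>x\<in>Obj C. Id C x \<in> Mor C \<and> Dom C (Id C x) = x \<and> Cod C (Id C x) = x"
    "\<forall>f\<in>Mor C. \<forall>g\<in>Mor C. Dom C g = Cod C f \<longrightarrow>
        Comp C g f \<in> Mor C \<and> Dom C (Comp C g f) = Dom C f \<and> Cod C (Comp C g f) = Cod C g"
    "\<forall>f\<in>Mor C. Comp C (Id C (Cod C f)) f = f \<and> Comp C f (Id C (Dom C f)) = f"
    "\<forall>f\<in>Mor C. \<forall>g\<in>Mor C. \<forall>h\<in>Mor C. Dom C h = Cod C g \<longrightarrow> Dom C g = Cod C f \<longrightarrow>
        Comp C h (Comp C g f) = Comp C (Comp C h g) f"
  using assms unfolding category_def by simp_all

lemma cat_facts:
  assumes "category C"
  shows cat_dom: "f \<in> Mor C \<Longrightarrow> Dom C f \<in> Obj C"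
    and cat_cod: "f \<in> Mor C \<Longrightarrow> Cod C f \<in> Obj C"
    and cat_id: "x \<in> Obj C \<Longrightarrow> Id C x \<in> Mor C"
    and cat_id_dom: "x \<in> Obj C \<Longrightarrow> Dom C (Id C x) = x"
    and cat_id_cod: "x \<in> Obj C \<Longrightarrow> Cod C (Id C x) = x"
    and cat_comp: "f \<in> Mor C \<Longrightarrow> g \<in> Mor C \<Longrightarrow> Dom C g = Cod C f \<Longrightarrow> Comp C g f \<in> Mor C"
    and cat_comp_dom: "f \<in> Mor C \<Longrightarrow> g \<in> Mor C \<Longrightarrow> Dom C g = Cod C f \<Longrightarrow> Dom C (Comp C g f) = Dom C f"
    and cat_comp_cod: "f \<in> Mor C \<Longrightarrow> g \<in> Mor C \<Longrightarrow> Dom C g = Cod C f \<Longrightarrow> Cod C (Comp C g f) = Cod C g"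
    and cat_idl: "f \<in> Mor C \<Longrightarrow> Comp C (Id C (Cod C f)) f = f"
    and cat_idr: "f \<in> Mor C \<Longrightarrow> Comp C f (Id C (Dom C f)) = f"
    and cat_assoc: "f \<in> Mor C \<Longrightarrow> g \<in> Mor C \<Longrightarrow> h \<in> Mor C \<Longrightarrow> Dom C h = Cod C g \<Longrightarrow> Dom C g = Cod C f \<Longrightarrow>
        Comp C h (Comp C g f) = Comp C (Comp C h g) f"
  using cat_D[OF assms] by simp_all

lemma qs_D:
  assumes "quasi_schemoid C S"
  shows "category C" "\<forall>\<sigma>\<in>S. \<sigma> \<noteq> {}" "\<Union>S = Mor C"
     "\<forall>\<sigma>\<in>S. \<forall>\<tau>\<in>S. \<sigma> \<noteq> \<tau> \<longrightarrow> \<sigma> \<inter> \<tau> = {}"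
     "\<forall>\<sigma>\<in>S. \<forall>\<tau>\<in>S. \<forall>\<mu>\<in>S. \<forall>f\<in>\<mu>. \<forall>g\<in>\<mu>.
        factor_pairs C \<sigma> \<tau> f \<approx> factor_pairs C \<sigma> \<tau> g"
  using assms unfolding quasi_schemoid_def by simp_all

lemma qs_cat: "quasi_schemoid C S \<Longrightarrow> category C"
  using qs_D(1) .
lemma qs_ne: "quasi_schemoid C S \<Longrightarrow> \<sigma> \<in> S \<Longrightarrow> \<sigma> \<noteq> {}"
  using qs_D(2) by blast
lemma qs_union: "quasi_schemoid C S \<Longrightarrow> \<Union>S = Mor C"
  using qs_D(3) .
lemma qs_disj: "quasi_schemoid C S \<Longrightarrow> \<sigma> \<in> S \<Longrightarrow> \<tau> \<in> S \<Longrightarrow> f \<in> \<sigma> \<Longrightarrow> f \<in> \<tau> \<Longrightarrow> \<sigma> = \<tau>"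
  using qs_D(4) by blast
lemma qs_fp: "quasi_schemoid C S \<Longrightarrow> \<sigma> \<in> S \<Longrightarrow> \<tau> \<in> S \<Longrightarrow> \<mu> \<in> S \<Longrightarrow> f \<in> \<mu> \<Longrightarrow> g \<in> \<mu> \<Longrightarrow>
        factor_pairs C \<sigma> \<tau> f \<approx> factor_pairs C \<sigma> \<tau> g"
proof -
  assume "quasi_schemoid C S" "\<sigma> \<in> S" "\<tau> \<in> S" "\<mu> \<in> S" "f \<in> \<mu>" "g \<in> \<mu>"
  with qs_D(5)[of C S] show ?thesis by simp
qed

lemma qs_sub: "quasi_schemoid C S \<Longrightarrow> \<sigma> \<in> S \<Longrightarrow> \<sigma> \<subseteq> Mor C"
  using qs_union by blast

lemma qs_ex_block: "quasi_schemoid C S \<Longrightarrow> f \<in> Mor C \<Longrightarrow> \<exists>\<sigma>\<in>S. f \<in> \<sigma>"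
  using qs_union by blast

lemma qs_finite_S: "quasi_schemoid C S \<Longrightarrow> finite (Mor C) \<Longrightarrow> finite S"
  using qs_union by (metis finite_UnionD)

lemma some_in: "quasi_schemoid C S \<Longrightarrow> \<sigma> \<in> S \<Longrightarrow> (SOME f. f \<in> \<sigma>) \<in> \<sigma>"
  using qs_ne by (metis ex_in_conv someI_ex)

lemma fb_qs: "finite_basic C S \<Longrightarrow> quasi_schemoid C S"
  and fb_fin: "finite_basic C S \<Longrightarrow> finite (Mor C)"
  and fb_grp: "finite_basic C S \<Longrightarrow> groupoid C"
  and fb_unital: "finite_basic C S \<Longrightarrow> \<sigma> \<in> S \<Longrightarrow> \<sigma> \<inter> Id C ` Obj C \<noteq> {} \<Longrightarrow> \<sigma> \<subseteq> Id C ` Obj C"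
  unfolding finite_basic_def finite_qs_def basic_def unital_def by blast+

lemma functor_facts:
  assumes "is_functor C D Fo Fm"
  shows fun_obj: "x \<in> Obj C \<Longrightarrow> Fo x \<in> Obj D"
    and fun_mor: "f \<in> Mor C \<Longrightarrow> Fm f \<in> Mor D"
    and fun_dom: "f \<in> Mor C \<Longrightarrow> Dom D (Fm f) = Fo (Dom C f)"
    and fun_cod: "f \<in> Mor C \<Longrightarrow> Cod D (Fm f) = Fo (Cod C f)"
    and fun_id: "x \<in> Obj C \<Longrightarrow> Fm (Id C x) = Id D (Fo x)"
    and fun_comp: "f \<in> Mor C \<Longrightarrow> g \<in> Mor C \<Longrightarrow> Dom C g = Cod C f \<Longrightarrow> Fm (Comp C g f) = Comp D (Fm g) (Fm f)"
  using assms unfolding is_functor_def by blast+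

lemma qsm_facts:
  assumes "qs_morphism C S D T Fo Fm"
  shows qsm_qs1: "quasi_schemoid C S" and qsm_qs2: "quasi_schemoid D T"
    and qsm_fun: "is_functor C D Fo Fm"
    and qsm_ex1: "\<sigma> \<in> S \<Longrightarrow> \<exists>!\<tau>. \<tau> \<in> T \<and> Fm ` \<sigma> \<subseteq> \<tau>"
  using assms unfolding qs_morphism_def by blast+

lemma blk_prop:
  assumes "qs_morphism C S D T Fo Fm" "\<sigma> \<in> S"
  shows "blk T Fm \<sigma> \<in> T \<and> Fm ` \<sigma> \<subseteq> blk T Fm \<sigma>"
  unfolding blk_def using theI'[OF qsm_ex1[OF assms]] .

lemma blk_in: "qs_morphism C S D T Fo Fm \<Longrightarrow> \<sigma> \<in> S \<Longrightarrow> blk T Fm \<sigma> \<in> T"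
  and blk_img: "qs_morphism C S D T Fo Fm \<Longrightarrow> \<sigma> \<in> S \<Longrightarrow> f \<in> \<sigma> \<Longrightarrow> Fm f \<in> blk T Fm \<sigma>"
  using blk_prop by blast+

lemma blk_eq:
  assumes "qs_morphism C S D T Fo Fm" "\<sigma> \<in> S" "\<tau> \<in> T" "f \<in> \<sigma>" "Fm f \<in> \<tau>"
  shows "blk T Fm \<sigma> = \<tau>"
  using qs_disj[OF qsm_qs2[OF assms(1)] blk_in[OF assms(1,2)] assms(3) blk_img[OF assms(1,2,4)] assms(5)] .

lemma adm_qsm: "admissible C S D T Fo Fm \<Longrightarrow> qs_morphism C S D T Fo Fm"
  unfolding admissible_def by blast

lemma adm_lift: "admissible C S D T Fo Fm \<Longrightarrow> x \<in> Obj C \<Longrightarrow> \<sigma> \<in> S \<Longrightarrow> g \<in> blk T Fm \<sigma> \<Longrightarrow> Cod D g = Fo x \<Longrightarrow>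
   \<exists>f\<in>\<sigma>. Cod C f = x \<and> Fm f = g"
  unfolding admissible_def by blast

lemma comp_admissible:
  assumes F: "admissible C1 S1 C2 S2 Fo Fm" and G: "admissible C2 S2 C3 S3 Go Gm"
  shows "admissible C1 S1 C3 S3 (Go \<circ> Fo) (Gm \<circ> Fm)"
    and "\<sigma> \<in> S1 \<Longrightarrow> blk S3 (Gm \<circ> Fm) \<sigma> = blk S3 Gm (blk S2 Fm \<sigma>)"
proof -
  have FQ: "qs_morphism C1 S1 C2 S2 Fo Fm" and GQ: "qs_morphism C2 S2 C3 S3 Go Gm"
    using F G by (simp_all add: adm_qsm)
  have Ff: "is_functor C1 C2 Fo Fm" and Gf: "is_functor C2 C3 Go Gm"
    using FQ GQ by (simp_all add: qsm_fun)
  have GFf: "is_functor C1 C3 (Go \<circ> Fo) (Gm \<circ> Fm)"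
    using Ff Gf unfolding is_functor_def by (auto simp: fun_mor[OF Ff])
  have ex: "\<exists>!\<tau>. \<tau> \<in> S3 \<and> (Gm \<circ> Fm) ` \<sigma> \<subseteq> \<tau>" if s: "\<sigma> \<in> S1" for \<sigma>
  proof
    show "blk S3 Gm (blk S2 Fm \<sigma>) \<in> S3 \<and> (Gm \<circ> Fm) ` \<sigma> \<subseteq> blk S3 Gm (blk S2 Fm \<sigma>)"
      using blk_in[OF GQ blk_in[OF FQ s]] blk_img[OF GQ blk_in[OF FQ s]] blk_img[OF FQ s] by auto
    fix \<tau> assume t: "\<tau> \<in> S3 \<and> (Gm \<circ> Fm) ` \<sigma> \<subseteq> \<tau>"
    obtain f where f: "f \<in> \<sigma>" using qs_ne[OF qsm_qs1[OF FQ] s] by blast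
    show "\<tau> = blk S3 Gm (blk S2 Fm \<sigma>)"
      using blk_eq[OF GQ blk_in[OF FQ s], of \<tau> "Fm f"] t f blk_img[OF FQ s f] by auto
  qed
  have QQ: "qs_morphism C1 S1 C3 S3 (Go \<circ> Fo) (Gm \<circ> Fm)"
    unfolding qs_morphism_def
  proof (intro conjI)
    show "quasi_schemoid C1 S1" by (rule qsm_qs1[OF FQ])
    show "quasi_schemoid C3 S3" by (rule qsm_qs2[OF GQ])
    show "is_functor C1 C3 (Go \<circ> Fo) (Gm \<circ> Fm)" by (rule GFf)
    show "\<forall>\<sigma>\<in>S1. \<exists>!\<tau>. \<tau> \<in> S3 \<and> (Gm \<circ> Fm) ` \<sigma> \<subseteq> \<tau>" by (rule ballI) (rule ex)
  qed
  have bb: "blk S3 (Gm \<circ> Fm) \<sigma> = blk S3 Gm (blk S2 Fm \<sigma>)" if s: "\<sigma> \<in> S1" for \<sigma>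
  proof -
    obtain f where f: "f \<in> \<sigma>" using qs_ne[OF qsm_qs1[OF FQ] s] by blast
    show ?thesis
      using blk_eq[OF QQ s blk_in[OF GQ blk_in[OF FQ s]] f] blk_img[OF GQ blk_in[OF FQ s] blk_img[OF FQ s f]]
      by simp
  qed
  then show "\<sigma> \<in> S1 \<Longrightarrow> blk S3 (Gm \<circ> Fm) \<sigma> = blk S3 Gm (blk S2 Fm \<sigma>)" .
  show "admissible C1 S1 C3 S3 (Go \<circ> Fo) (Gm \<circ> Fm)"
    unfolding admissible_def
  proof (intro conjI QQ ballI impI)
    fix x \<sigma> g assume x: "x \<in> Obj C1" and s: "\<sigma> \<in> S1" and g: "g \<in> blk S3 (Gm \<circ> Fm) \<sigma>"
      and c: "Cod C3 g = (Go \<circ> Fo) x"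
    have "g \<in> blk S3 Gm (blk S2 Fm \<sigma>)" using g bb[OF s] by simp
    then obtain f' where f': "f' \<in> blk S2 Fm \<sigma>" "Cod C2 f' = Fo x" "Gm f' = g"
      using adm_lift[OF G fun_obj[OF Ff x] blk_in[OF FQ s]] c by auto
    then obtain f where "f \<in> \<sigma>" "Cod C1 f = x" "Fm f = f'"
      using adm_lift[OF F x s] by blast
    then show "\<exists>f\<in>\<sigma>. Cod C1 f = x \<and> (Gm \<circ> Fm) f = g" using f' by auto
  qed
qed

lemma id_admissible:
  assumes Q: "quasi_schemoid C S"
  shows "admissible C S C S id id" and "\<sigma> \<in> S \<Longrightarrow> blk S id \<sigma> = \<sigma>"
proof -
  have fn: "is_functor C C id id"
    using qs_cat[OF Q] unfolding is_functor_def category_def by auto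
  have ex: "\<exists>!\<tau>. \<tau> \<in> S \<and> id ` \<sigma> \<subseteq> \<tau>" if s: "\<sigma> \<in> S" for \<sigma>
  proof
    show "\<sigma> \<in> S \<and> id ` \<sigma> \<subseteq> \<sigma>" using s by simp
    fix \<tau> assume t: "\<tau> \<in> S \<and> id ` \<sigma> \<subseteq> \<tau>"
    obtain f where f: "f \<in> \<sigma>" using qs_ne[OF Q s] by blast
    show "\<tau> = \<sigma>" using qs_disj[OF Q s, of \<tau> f] t f by auto
  qed
  have QQ: "qs_morphism C S C S id id" unfolding qs_morphism_def
  proof (intro conjI)
    show "\<forall>\<sigma>\<in>S. \<exists>!\<tau>. \<tau> \<in> S \<and> id ` \<sigma> \<subseteq> \<tau>" by (rule ballI) (rule ex)
  qed (rule Q, rule Q, rule fn)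
  have bb: "blk S id \<sigma> = \<sigma>" if s: "\<sigma> \<in> S" for \<sigma>
  proof -
    obtain f where f: "f \<in> \<sigma>" using qs_ne[OF Q s] by blast
    show ?thesis using blk_eq[OF QQ s s f] f by simp
  qed
  then show "\<sigma> \<in> S \<Longrightarrow> blk S id \<sigma> = \<sigma>" .
  show "admissible C S C S id id"
    unfolding admissible_def using QQ bb by auto
qed


subsection \<open>Schemoid algebra\<close>

definition bconst :: "('o, 'm) cat \<Rightarrow> 'm set set \<Rightarrow> ('m \<Rightarrow> 'k::comm_ring_1) \<Rightarrow> bool" where
  "bconst C S a \<longleftrightarrow> (\<forall>h. h \<notin> Mor C \<longrightarrow> a h = 0) \<and> (\<forall>\<sigma>\<in>S. \<forall>f\<in>\<sigma>. a f = a (SOME f. f \<in> \<sigma>))"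

lemma bconst_out: "bconst C S a \<Longrightarrow> h \<notin> Mor C \<Longrightarrow> a h = 0"
  unfolding bconst_def by blast

lemma bconst_rep: "bconst C S a \<Longrightarrow> \<sigma> \<in> S \<Longrightarrow> f \<in> \<sigma> \<Longrightarrow> a f = a (SOME f. f \<in> \<sigma>)"
  unfolding bconst_def by blast

lemma bconst_eq: "bconst C S a \<Longrightarrow> \<sigma> \<in> S \<Longrightarrow> f \<in> \<sigma> \<Longrightarrow> g \<in> \<sigma> \<Longrightarrow> a f = a g"
  using bconst_rep by metis

lemma bconstI:
  assumes "\<And>h. h \<notin> Mor C \<Longrightarrow> a h = 0" "\<And>\<sigma> f g. \<sigma> \<in> S \<Longrightarrow> f \<in> \<sigma> \<Longrightarrow> g \<in> \<sigma> \<Longrightarrow> a f = a g"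
    "quasi_schemoid C S"
  shows "bconst C S a"
  unfolding bconst_def using assms some_in by metis

lemma sum_sblock:
  assumes Q: "quasi_schemoid C S" and fin: "finite S" and s0: "\<sigma>0 \<in> S" and h: "h \<in> \<sigma>0"
  shows "(\<Sum>\<sigma>\<in>S. c \<sigma> * sblock \<sigma> h) = (c \<sigma>0 :: 'k::comm_ring_1)"
proof -
  have "(\<Sum>\<sigma>\<in>S. c \<sigma> * sblock \<sigma> h) = (\<Sum>\<sigma>\<in>S. if \<sigma> = \<sigma>0 then c \<sigma> else 0)"
  proof (rule sum.cong[OF refl])
    fix \<sigma> assume s: "\<sigma> \<in> S"
    show "c \<sigma> * sblock \<sigma> h = (if \<sigma> = \<sigma>0 then c \<sigma> else 0)"
    proof (cases "\<sigma> = \<sigma>0")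
      case True then show ?thesis using h by (simp add: sblock_def)
    next
      case False
      then have "h \<notin> \<sigma>" using qs_disj[OF Q s s0, of h] h by blast
      then show ?thesis using False by (simp add: sblock_def)
    qed
  qed
  also have "\<dots> = c \<sigma>0" using fin s0 by simp
  finally show ?thesis .
qed

lemma sum_sblock0:
  assumes Q: "quasi_schemoid C S" and h: "h \<notin> Mor C"
  shows "(\<Sum>\<sigma>\<in>S. c \<sigma> * sblock \<sigma> h) = (0 :: 'k::comm_ring_1)"
  by (rule sum.neutral) (use qs_sub[OF Q] h in \<open>auto simp: sblock_def\<close>)

lemma sch_alg_iff:
  assumes Q: "quasi_schemoid C S" and fin: "finite S"
  shows "a \<in> sch_alg C S \<longleftrightarrow> bconst C S a"
proof
  assume "a \<in> sch_alg C S"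
  then obtain c where a: "a = (\<lambda>h. \<Sum>\<sigma>\<in>S. c \<sigma> * sblock \<sigma> h)" by (auto simp: sch_alg_def)
  show "bconst C S a"
  proof (rule bconstI[OF _ _ Q])
    fix h assume "h \<notin> Mor C" then show "a h = 0" using a sum_sblock0[OF Q] by simp
  next
    fix \<sigma> f g assume s: "\<sigma> \<in> S" and f: "f \<in> \<sigma>" and g: "g \<in> \<sigma>"
    show "a f = a g" using a sum_sblock[OF Q fin s f, of c] sum_sblock[OF Q fin s g, of c] by simp
  qed
next
  assume b: "bconst C S a"
  have "a = (\<lambda>h. \<Sum>\<sigma>\<in>S. a (SOME f. f \<in> \<sigma>) * sblock \<sigma> h)"
  proof
    fix h show "a h = (\<Sum>\<sigma>\<in>S. a (SOME f. f \<in> \<sigma>) * sblock \<sigma> h)"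
    proof (cases "h \<in> Mor C")
      case True
      then obtain \<sigma> where s: "\<sigma> \<in> S" "h \<in> \<sigma>" using qs_ex_block[OF Q] by blast
      then show ?thesis using sum_sblock[OF Q fin s, of "\<lambda>\<sigma>. a (SOME f. f \<in> \<sigma>)"] bconst_rep[OF b s] by simp
    next
      case False then show ?thesis using sum_sblock0[OF Q False] bconst_out[OF b] by simp
    qed
  qed
  then show "a \<in> sch_alg C S" unfolding sch_alg_def mem_Collect_eq by (rule exI[where x="\<lambda>\<sigma>. a (SOME f. f \<in> \<sigma>)"])
qed

lemma sum_partition:
  assumes "finite I" "\<And>i. i \<in> I \<Longrightarrow> finite (B i)"
    "\<And>i j. i \<in> I \<Longrightarrow> j \<in> I \<Longrightarrow> i \<noteq> j \<Longrightarrow> B i \<inter> B j = {}" "A \<subseteq> (\<Union>i\<in>I. B i)"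
  shows "sum F A = (\<Sum>i\<in>I. sum F (A \<inter> B i))"
proof -
  have "A = (\<Union>i\<in>I. A \<inter> B i)" using assms(4) by blast
  then have "sum F A = sum F (\<Union>i\<in>I. A \<inter> B i)" by simp
  also have "\<dots> = (\<Sum>i\<in>I. sum F (A \<inter> B i))"
    by (rule sum.UNION_disjoint) (use assms in auto)
  finally show ?thesis .
qed

lemma sum_blocks:
  assumes Q: "quasi_schemoid C S" and fin: "finite (Mor C)" and A: "A \<subseteq> Mor C"
  shows "sum F A = (\<Sum>\<sigma>\<in>S. sum F (A \<inter> \<sigma>))"
proof (rule sum_partition)
  show "finite S" using qs_finite_S[OF Q fin] .
  show "finite \<sigma>" if "\<sigma> \<in> S" for \<sigma> using qs_sub[OF Q that] fin finite_subset by blast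
  show "\<sigma> \<inter> \<tau> = {}" if "\<sigma> \<in> S" "\<tau> \<in> S" "\<sigma> \<noteq> \<tau>" for \<sigma> \<tau>
    using qs_disj[OF Q that(1,2)] that(3) by blast
  show "A \<subseteq> (\<Union>\<sigma>\<in>S. \<sigma>)" using A qs_union[OF Q] by simp
qed

lemma sum_blocks2:
  assumes Q: "quasi_schemoid C S" and fin: "finite (Mor C)" and A: "A \<subseteq> Mor C \<times> Mor C"
  shows "sum F A = (\<Sum>\<sigma>\<in>S. \<Sum>\<tau>\<in>S. sum F (A \<inter> (\<sigma> \<times> \<tau>)))"
proof -
  have "sum F A = (\<Sum>p\<in>S \<times> S. sum F (A \<inter> (fst p \<times> snd p)))"
  proof (rule sum_partition)
    show "finite (S \<times> S)" using qs_finite_S[OF Q fin] by simp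
    show "finite (fst p \<times> snd p)" if "p \<in> S \<times> S" for p
      using qs_sub[OF Q] that fin finite_subset by (metis finite_SigmaI mem_Sigma_iff prod.collapse)
    show "(fst p \<times> snd p) \<inter> (fst q \<times> snd q) = {}" if "p \<in> S \<times> S" "q \<in> S \<times> S" "p \<noteq> q" for p q
    proof -
      obtain a b c d where pq: "p = (a, b)" "q = (c, d)" by fastforce
      show ?thesis using qs_disj[OF Q, of a c] qs_disj[OF Q, of b d] that pq by auto
    qed
    show "A \<subseteq> (\<Union>p\<in>S \<times> S. fst p \<times> snd p)"
    proof
      fix x assume x: "x \<in> A"
      then obtain f g where fg: "x = (f, g)" "f \<in> Mor C" "g \<in> Mor C" using A by blast
      obtain \<sigma> \<tau> where "\<sigma> \<in> S" "\<tau> \<in> S" "f \<in> \<sigma>" "g \<in> \<tau>" using qs_ex_block[OF Q] fg by metis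
      then show "x \<in> (\<Union>p\<in>S \<times> S. fst p \<times> snd p)" using fg by force
    qed
  qed
  also have "\<dots> = (\<Sum>\<sigma>\<in>S. \<Sum>\<tau>\<in>S. sum F (A \<inter> (\<sigma> \<times> \<tau>)))"
    by (simp add: sum.cartesian_product split_beta)
  finally show ?thesis .
qed

lemma fp_finite:
  assumes Q: "quasi_schemoid C S" and fin: "finite (Mor C)" and s: "\<sigma> \<in> S" and t: "\<tau> \<in> S"
  shows "finite (factor_pairs C \<sigma> \<tau> f)"
proof (rule finite_subset)
  show "factor_pairs C \<sigma> \<tau> f \<subseteq> Mor C \<times> Mor C"
    using qs_sub[OF Q s] qs_sub[OF Q t] unfolding factor_pairs_def by blast
  show "finite (Mor C \<times> Mor C)" using fin by simp
qed

lemma fp_card: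
  assumes Q: "quasi_schemoid C S" and fin: "finite (Mor C)" and s: "\<sigma> \<in> S" and t: "\<tau> \<in> S"
    and m: "\<mu> \<in> S" "f \<in> \<mu>" "g \<in> \<mu>"
  shows "card (factor_pairs C \<sigma> \<tau> f) = card (factor_pairs C \<sigma> \<tau> g)"
  using qs_fp[OF Q s t m] eqpoll_iff_card[OF fp_finite[OF Q fin s t] fp_finite[OF Q fin s t]] by blast

lemma cat_mult_out:
  assumes "category C" "h \<notin> Mor C" shows "cat_mult C a b h = 0"
  unfolding cat_mult_def using cat_comp[OF assms(1)] assms(2) by (intro sum.neutral) auto

lemma cat_mult_blocks:
  assumes Q: "quasi_schemoid C S" and fin: "finite (Mor C)"
    and ba: "bconst C S a" and bb: "bconst C S b"
  shows "cat_mult C a b h = (\<Sum>\<sigma>\<in>S. \<Sum>\<tau>\<in>S.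
      of_nat (card (factor_pairs C \<sigma> \<tau> h)) * (a (SOME f. f \<in> \<sigma>) * b (SOME f. f \<in> \<tau>)))"
proof -
  let ?P = "{(f, g). f \<in> Mor C \<and> g \<in> Mor C \<and> Dom C f = Cod C g \<and> Comp C f g = h}"
  have "cat_mult C a b h = sum (\<lambda>(f, g). a f * b g) ?P" by (simp add: cat_mult_def)
  also have "\<dots> = (\<Sum>\<sigma>\<in>S. \<Sum>\<tau>\<in>S. sum (\<lambda>(f, g). a f * b g) (?P \<inter> (\<sigma> \<times> \<tau>)))"
    by (rule sum_blocks2[OF Q fin]) blast
  also have "\<dots> = (\<Sum>\<sigma>\<in>S. \<Sum>\<tau>\<in>S.
      of_nat (card (factor_pairs C \<sigma> \<tau> h)) * (a (SOME f. f \<in> \<sigma>) * b (SOME f. f \<in> \<tau>)))"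
  proof (intro sum.cong refl)
    fix \<sigma> \<tau> assume s: "\<sigma> \<in> S" and t: "\<tau> \<in> S"
    have eq: "?P \<inter> (\<sigma> \<times> \<tau>) = factor_pairs C \<sigma> \<tau> h"
      using qs_sub[OF Q s] qs_sub[OF Q t] unfolding factor_pairs_def by blast
    have "sum (\<lambda>(f, g). a f * b g) (factor_pairs C \<sigma> \<tau> h)
        = sum (\<lambda>_. a (SOME f. f \<in> \<sigma>) * b (SOME f. f \<in> \<tau>)) (factor_pairs C \<sigma> \<tau> h)"
    proof (rule sum.cong[OF refl])
      fix p assume "p \<in> factor_pairs C \<sigma> \<tau> h"
      then obtain f g where p: "p = (f, g)" "f \<in> \<sigma>" "g \<in> \<tau>" unfolding factor_pairs_def by blast
      show "(\<lambda>(f, g). a f * b g) p = a (SOME f. f \<in> \<sigma>) * b (SOME f. f \<in> \<tau>)"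
        using p bconst_rep[OF ba s p(2)] bconst_rep[OF bb t p(3)] by simp
    qed
    then show "sum (\<lambda>(f, g). a f * b g) (?P \<inter> (\<sigma> \<times> \<tau>))
      = of_nat (card (factor_pairs C \<sigma> \<tau> h)) * (a (SOME f. f \<in> \<sigma>) * b (SOME f. f \<in> \<tau>))"
      using eq by simp
  qed
  finally show ?thesis .
qed

lemma cat_mult_bconst:
  assumes Q: "quasi_schemoid C S" and fin: "finite (Mor C)"
    and ba: "bconst C S a" and bb: "bconst C S b"
  shows "bconst C S (cat_mult C a b)"
proof (rule bconstI[OF _ _ Q])
  fix h assume "h \<notin> Mor C" then show "cat_mult C a b h = 0" using cat_mult_out[OF qs_cat[OF Q]] by blast
next
  fix \<mu> f g assume m: "\<mu> \<in> S" "f \<in> \<mu>" "g \<in> \<mu>"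
  show "cat_mult C a b f = cat_mult C a b g"
    unfolding cat_mult_blocks[OF Q fin ba bb]
    using fp_card[OF Q fin _ _ m] by simp
qed

lemma part3:
  assumes FB: "finite_basic C S"
  shows "((\<lambda>h. 0) :: 'm \<Rightarrow> 'k::comm_ring_1) \<in> sch_alg C S \<and>
        (\<forall>a\<in>(sch_alg C S :: ('m \<Rightarrow> 'k) set). \<forall>b\<in>sch_alg C S.
            (\<lambda>h. a h + b h) \<in> sch_alg C S \<and> cat_mult C a b \<in> sch_alg C S) \<and>
        (\<forall>(c::'k) a. a \<in> sch_alg C S \<longrightarrow> (\<lambda>h. c * a h) \<in> sch_alg C S)"
proof -
  have Q: "quasi_schemoid C S" and fin: "finite (Mor C)" using FB by (simp_all add: fb_qs fb_fin)
  have finS: "finite S" using qs_finite_S[OF Q fin] .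
  note iff = sch_alg_iff[OF Q finS]
  show ?thesis
  proof (intro conjI ballI allI impI)
    show "(\<lambda>h. 0) \<in> sch_alg C S" unfolding iff by (rule bconstI[OF _ _ Q]) simp_all
  next
    fix a b :: "'m \<Rightarrow> 'k" assume a: "a \<in> sch_alg C S" and b: "b \<in> sch_alg C S"
    then have ba: "bconst C S a" and bb: "bconst C S b" using iff by auto
    show "(\<lambda>h. a h + b h) \<in> sch_alg C S" unfolding iff
    proof (rule bconstI[OF _ _ Q])
      fix h assume "h \<notin> Mor C" then show "a h + b h = 0" using bconst_out[OF ba] bconst_out[OF bb] by simp
    next
      fix \<sigma> f g assume sfg: "\<sigma> \<in> S" "f \<in> \<sigma>" "g \<in> \<sigma>"
      show "a f + b f = a g + b g" using bconst_eq[OF ba sfg] bconst_eq[OF bb sfg] by simp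
    qed
    show "cat_mult C a b \<in> sch_alg C S" unfolding iff by (rule cat_mult_bconst[OF Q fin ba bb])
  next
    fix c :: 'k and a :: "'m \<Rightarrow> 'k" assume a: "a \<in> sch_alg C S"
    then have ba: "bconst C S a" using iff by auto
    show "(\<lambda>h. c * a h) \<in> sch_alg C S" unfolding iff
    proof (rule bconstI[OF _ _ Q])
      fix h assume "h \<notin> Mor C" then show "c * a h = 0" using bconst_out[OF ba] by simp
    next
      fix \<sigma> f g assume sfg: "\<sigma> \<in> S" "f \<in> \<sigma>" "g \<in> \<sigma>"
      show "c * a f = c * a g" using bconst_eq[OF ba sfg] by simp
    qed
  qed
qed


lemma Kmap_apply: "Kmap C S D T Fo Fm a g = (\<Sum>\<sigma>\<in>S.
      if g \<in> blk T Fm \<sigma> then of_nat (nphi C D T Fo Fm \<sigma>) * a (SOME f. f \<in> \<sigma>) else 0)"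
  unfolding Kmap_def by simp

lemma Kmap_sblock:
  assumes FQ: "qs_morphism C S D T Fo Fm" and fin: "finite S" and p: "\<pi> \<in> S"
  shows "Kmap C S D T Fo Fm (sblock \<pi> :: 'm \<Rightarrow> 'k::comm_ring_1)
     = (\<lambda>h. of_nat (nphi C D T Fo Fm \<pi>) * sblock (blk T Fm \<pi>) h)"
proof
  fix g
  have Q: "quasi_schemoid C S" using qsm_qs1[OF FQ] .
  have "Kmap C S D T Fo Fm (sblock \<pi> :: 'm \<Rightarrow> 'k) g = (\<Sum>\<sigma>\<in>S. if \<sigma> = \<pi> then
      (if g \<in> blk T Fm \<pi> then of_nat (nphi C D T Fo Fm \<pi>) else 0) else (0::'k))"
    unfolding Kmap_apply
  proof (rule sum.cong[OF refl])
    fix \<sigma> assume s: "\<sigma> \<in> S"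
    have "(SOME f. f \<in> \<sigma>) \<in> \<pi> \<longleftrightarrow> \<sigma> = \<pi>"
      using qs_disj[OF Q s p] some_in[OF Q s] some_in[OF Q p] by blast
    then show "(if g \<in> blk T Fm \<sigma> then of_nat (nphi C D T Fo Fm \<sigma>) * (sblock \<pi> :: 'm \<Rightarrow> 'k) (SOME f. f \<in> \<sigma>) else 0)
      = (if \<sigma> = \<pi> then (if g \<in> blk T Fm \<pi> then of_nat (nphi C D T Fo Fm \<pi>) else 0) else (0::'k))"
      by (auto simp: sblock_def)
  qed
  also have "\<dots> = (if g \<in> blk T Fm \<pi> then of_nat (nphi C D T Fo Fm \<pi>) else 0)"
    using fin p by simp
  also have "\<dots> = of_nat (nphi C D T Fo Fm \<pi>) * sblock (blk T Fm \<pi>) g"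
    by (simp add: sblock_def)
  finally show "Kmap C S D T Fo Fm (sblock \<pi> :: 'm \<Rightarrow> 'k) g = of_nat (nphi C D T Fo Fm \<pi>) * sblock (blk T Fm \<pi>) g" .
qed

lemma Kmap_bconst:
  assumes FQ: "qs_morphism C S D T Fo Fm"
  shows "bconst D T (Kmap C S D T Fo Fm a)"
proof (rule bconstI[OF _ _ qsm_qs2[OF FQ]])
  fix h assume h: "h \<notin> Mor D"
  have "h \<notin> blk T Fm \<sigma>" if "\<sigma> \<in> S" for \<sigma>
    using qs_sub[OF qsm_qs2[OF FQ] blk_in[OF FQ that]] h by blast
  then show "Kmap C S D T Fo Fm a h = 0" unfolding Kmap_apply by (intro sum.neutral) auto
next
  fix \<tau> f g assume t: "\<tau> \<in> T" and f: "f \<in> \<tau>" and g: "g \<in> \<tau>"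
  have "f \<in> blk T Fm \<sigma> \<longleftrightarrow> g \<in> blk T Fm \<sigma>" if "\<sigma> \<in> S" for \<sigma>
    using qs_disj[OF qsm_qs2[OF FQ] blk_in[OF FQ that] t] f g by blast
  then show "Kmap C S D T Fo Fm a f = Kmap C S D T Fo Fm a g" unfolding Kmap_apply
    by (intro sum.cong) auto
qed

lemma Kmap_add: "Kmap C S D T Fo Fm (\<lambda>h. a h + b h) = (\<lambda>h. Kmap C S D T Fo Fm a h + Kmap C S D T Fo Fm b h)"
  unfolding Kmap_def by (auto simp: sum.distrib[symmetric] distrib_left intro!: sum.cong)

lemma Kmap_scale: "Kmap C S D T Fo Fm (\<lambda>h. c * a h) = (\<lambda>h. c * Kmap C S D T Fo Fm a h)"
  unfolding Kmap_def by (auto simp: sum_distrib_left intro!: sum.cong)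

subsection \<open>The integer n\<close>

lemma unital_block:
  assumes FQ: "qs_morphism C S D T Fo Fm" and FB2: "finite_basic D T" and r: "\<rho> \<in> S"
    and b: "b \<in> \<rho>" "y \<in> Obj D" "Fm b = Id D y" and b': "b' \<in> \<rho>"
  shows "\<exists>y'\<in>Obj D. Fm b' = Id D y'"
proof -
  have "blk T Fm \<rho> \<inter> Id D ` Obj D \<noteq> {}" using blk_img[OF FQ r b(1)] b by blast
  then have "blk T Fm \<rho> \<subseteq> Id D ` Obj D" using fb_unital[OF FB2 blk_in[OF FQ r]] by blast
  then show ?thesis using blk_img[OF FQ r b'] by blast
qed

lemma grp_inv:
  assumes "groupoid C" "f \<in> Mor C"
  shows "\<exists>g\<in>Mor C. Dom C g = Cod C f \<and> Cod C g = Dom C f \<and>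
        Comp C g f = Id C (Dom C f) \<and> Comp C f g = Id C (Cod C f)"
  using assms unfolding groupoid_def by blast


lemma Kmap_nz: "Kmap C S D T Fo Fm a p \<noteq> 0 \<Longrightarrow> \<exists>\<sigma>\<in>S. p \<in> blk T Fm \<sigma>"
proof (rule ccontr)
  assume a: "Kmap C S D T Fo Fm a p \<noteq> 0" and "\<not> (\<exists>\<sigma>\<in>S. p \<in> blk T Fm \<sigma>)"
  then have "Kmap C S D T Fo Fm a p = 0" unfolding Kmap_apply by (intro sum.neutral) auto
  with a show False by simp
qed


lemma eqpoll_ne: assumes "A \<approx> B" "A \<noteq> {}" shows "B \<noteq> {}"
proof
  assume "B = {}"
  with assms(1) have "A \<approx> {}" by simp
  then have "A = {}" by simp
  with assms(2) show False by simp
qed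

lemma id_class:
  assumes FB: "finite_basic D T" and t: "\<tau> \<in> T" and p: "p \<in> \<tau>" "p' \<in> \<tau>" and I: "I \<in> T"
    and i: "Id D (Cod D p) \<in> I"
  shows "Id D (Cod D p') \<in> I"
proof -
  have Q: "quasi_schemoid D T" using fb_qs[OF FB] .
  have cat: "category D" using qs_cat[OF Q] .
  have pM: "p \<in> Mor D" "p' \<in> Mor D" using qs_sub[OF Q t] p by auto
  have "(Id D (Cod D p), p) \<in> factor_pairs C' I \<tau> p" if "C' = D" for C'
    using that i p cat_id_dom[OF cat cat_cod[OF cat pM(1)]] cat_idl[OF cat pM(1)]
    unfolding factor_pairs_def by simp
  then have ne: "factor_pairs D I \<tau> p \<noteq> {}" by blast
  have "factor_pairs D I \<tau> p \<approx> factor_pairs D I \<tau> p'" using qs_fp[OF Q I t t p] .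
  then have "factor_pairs D I \<tau> p' \<noteq> {}" using ne by (rule eqpoll_ne)
  then obtain e b where eb: "e \<in> I" "b \<in> \<tau>" "Dom D e = Cod D b" "Comp D e b = p'"
    unfolding factor_pairs_def by blast
  have "I \<inter> Id D ` Obj D \<noteq> {}" using i cat_cod[OF cat pM(1)] by blast
  then have "I \<subseteq> Id D ` Obj D" using fb_unital[OF FB I] by blast
  then obtain y where y: "y \<in> Obj D" "e = Id D y" using eb(1) by blast
  have bM: "b \<in> Mor D" using qs_sub[OF Q t] eb(2) by blast
  have "y = Cod D b" using eb(3) y cat_id_dom[OF cat y(1)] by simp
  then have "p' = b" using eb(4) y cat_idl[OF cat bM] by simp
  then show ?thesis using eb(1) y \<open>y = Cod D b\<close> by simp
qed

lemma reach:
  assumes FB: "finite_basic D T" and t: "\<tau> \<in> T" and g: "g \<in> \<tau>" and u: "u \<in> Obj D" and I: "I \<in> T"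
    and i: "Id D (Cod D g) \<in> I" "Id D u \<in> I"
  shows "\<exists>g'\<in>\<tau>. Cod D g' = u"
proof -
  have Q: "quasi_schemoid D T" using fb_qs[OF FB] .
  have cat: "category D" using qs_cat[OF Q] .
  have gM: "g \<in> Mor D" using qs_sub[OF Q t] g by auto
  obtain r where r: "r \<in> Mor D" "Dom D r = Cod D g" "Cod D r = Dom D g" "Comp D g r = Id D (Cod D g)"
    using grp_inv[OF fb_grp[OF FB] gM] by blast
  obtain \<rho> where \<rho>: "\<rho> \<in> T" "r \<in> \<rho>" using qs_ex_block[OF Q r(1)] by blast
  have "(g, r) \<in> factor_pairs D \<tau> \<rho> (Id D (Cod D g))" unfolding factor_pairs_def using g \<rho> r by simp
  then have ne: "factor_pairs D \<tau> \<rho> (Id D (Cod D g)) \<noteq> {}" by blast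
  have "factor_pairs D \<tau> \<rho> (Id D (Cod D g)) \<approx> factor_pairs D \<tau> \<rho> (Id D u)"
    using qs_fp[OF Q t \<rho>(1) I i] .
  then have "factor_pairs D \<tau> \<rho> (Id D u) \<noteq> {}" using ne by (rule eqpoll_ne)
  then obtain g' r' where gr: "g' \<in> \<tau>" "r' \<in> \<rho>" "Dom D g' = Cod D r'" "Comp D g' r' = Id D u"
    unfolding factor_pairs_def by blast
  have M: "g' \<in> Mor D" "r' \<in> Mor D" using qs_sub[OF Q t] qs_sub[OF Q \<rho>(1)] gr by auto
  have "Cod D g' = u" using cat_comp_cod[OF cat M(2) M(1) gr(3)] gr(4) cat_id_cod[OF cat u] by simp
  then show ?thesis using gr(1) by blast
qed

context
  fixes C :: "('o1, 'm1) cat" and S :: "'m1 set set" and D :: "('o2, 'm2) cat" and T :: "'m2 set set"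
    and Fo :: "'o1 \<Rightarrow> 'o2" and Fm :: "'m1 \<Rightarrow> 'm2"
  assumes F: "admissible C S D T Fo Fm" and FB1: "finite_basic C S" and FB2: "finite_basic D T"
begin

lemma FQ: "qs_morphism C S D T Fo Fm" using adm_qsm[OF F] .
lemma Q1: "quasi_schemoid C S" using fb_qs[OF FB1] .
lemma Q2: "quasi_schemoid D T" using fb_qs[OF FB2] .
lemma catC: "category C" using qs_cat[OF Q1] .
lemma catD: "category D" using qs_cat[OF Q2] .
lemma finC: "finite (Mor C)" using fb_fin[OF FB1] .
lemma Ff: "is_functor C D Fo Fm" using qsm_fun[OF FQ] .

definition PP :: "'m1 set \<Rightarrow> 'm1 \<Rightarrow> ('m1 \<times> 'm1) set" where
  "PP \<sigma> f0 = {(a, b). a \<in> \<sigma> \<and> b \<in> Mor C \<and> (\<exists>y\<in>Obj D. Fm b = Id D y) \<and> Dom C a = Cod C b \<and> Comp C a b = f0}"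

lemma card_A_P:
  assumes s: "\<sigma> \<in> S" and f0: "f0 \<in> \<sigma>" "Cod C f0 = x" "Fm f0 = g"
  shows "card {f \<in> \<sigma>. Cod C f = x \<and> Fm f = g} = card (PP \<sigma> f0)"
proof -
  have sub: "\<sigma> \<subseteq> Mor C" using qs_sub[OF Q1 s] .
  have f0M: "f0 \<in> Mor C" using f0 sub by blast
  have inj: "inj_on fst (PP \<sigma> f0)"
  proof (rule inj_onI)
    fix p q assume p: "p \<in> PP \<sigma> f0" and q: "q \<in> PP \<sigma> f0" and e: "fst p = fst q"
    obtain a b where pab: "p = (a, b)" "a \<in> \<sigma>" "b \<in> Mor C" "Dom C a = Cod C b" "Comp C a b = f0"
      using p unfolding PP_def by blast
    obtain b' where qab: "q = (a, b')" "b' \<in> Mor C" "Dom C a = Cod C b'" "Comp C a b' = f0"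
      using q e pab unfolding PP_def by auto
    have aM: "a \<in> Mor C" using pab sub by blast
    obtain a' where a': "a' \<in> Mor C" "Dom C a' = Cod C a" "Cod C a' = Dom C a" "Comp C a' a = Id C (Dom C a)"
      using grp_inv[OF fb_grp[OF FB1] aM] by blast
    have "b = Comp C a' f0" if "b \<in> Mor C" "Dom C a = Cod C b" "Comp C a b = f0" for b
    proof -
      have "Comp C a' f0 = Comp C (Comp C a' a) b"
        using cat_assoc[OF catC that(1) aM a'(1) a'(2) that(2)] that(3) by simp
      also have "\<dots> = b" using a'(4) that(2) cat_idl[OF catC that(1)] by simp
      finally show ?thesis by simp
    qed
    then show "p = q" using pab qab by metis
  qed
  have img: "fst ` PP \<sigma> f0 = {f \<in> \<sigma>. Cod C f = x \<and> Fm f = g}"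
  proof
    show "fst ` PP \<sigma> f0 \<subseteq> {f \<in> \<sigma>. Cod C f = x \<and> Fm f = g}"
    proof
      fix a assume "a \<in> fst ` PP \<sigma> f0"
      then obtain b y where ab: "a \<in> \<sigma>" "b \<in> Mor C" "y \<in> Obj D" "Fm b = Id D y" "Dom C a = Cod C b" "Comp C a b = f0"
        unfolding PP_def by auto
      have aM: "a \<in> Mor C" using ab sub by blast
      have c: "Cod C a = x" using cat_comp_cod[OF catC ab(2) aM ab(5)] ab(6) f0 by simp
      have y: "y = Dom D (Fm a)"
        using fun_dom[OF Ff aM] fun_cod[OF Ff ab(2)] ab(4,5) cat_id_cod[OF catD ab(3)] by simp
      have "Fm a = Comp D (Fm a) (Fm b)" using ab(4) y cat_idr[OF catD fun_mor[OF Ff aM]] by simp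
      also have "\<dots> = Fm f0" using fun_comp[OF Ff ab(2) aM ab(5)] ab(6) by simp
      finally show "a \<in> {f \<in> \<sigma>. Cod C f = x \<and> Fm f = g}" using ab(1) c f0 by simp
    qed
  next
    show "{f \<in> \<sigma>. Cod C f = x \<and> Fm f = g} \<subseteq> fst ` PP \<sigma> f0"
    proof
      fix a assume "a \<in> {f \<in> \<sigma>. Cod C f = x \<and> Fm f = g}"
      then have a: "a \<in> \<sigma>" "Cod C a = x" "Fm a = g" by auto
      have aM: "a \<in> Mor C" using a sub by blast
      obtain a' where a': "a' \<in> Mor C" "Dom C a' = Cod C a" "Cod C a' = Dom C a"
          "Comp C a' a = Id C (Dom C a)" "Comp C a a' = Id C (Cod C a)"
        using grp_inv[OF fb_grp[OF FB1] aM] by blast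
      define b where "b = Comp C a' f0"
      have d: "Dom C a' = Cod C f0" using a'(2) a(2) f0 by simp
      have bM: "b \<in> Mor C" unfolding b_def using cat_comp[OF catC f0M a'(1) d] .
      have cb: "Cod C b = Dom C a" unfolding b_def using cat_comp_cod[OF catC f0M a'(1) d] a'(3) by simp
      have ab: "Comp C a b = f0"
      proof -
        have "Comp C a b = Comp C (Comp C a a') f0"
          unfolding b_def using cat_assoc[OF catC f0M a'(1) aM _ d] a'(3) by simp
        also have "\<dots> = f0" using a'(5) a(2) f0(2) cat_idl[OF catC f0M] by simp
        finally show ?thesis .
      qed
      have "Fm b = Comp D (Fm a') (Fm f0)" unfolding b_def using fun_comp[OF Ff f0M a'(1) d] .
      also have "\<dots> = Comp D (Fm a') (Fm a)" using a(3) f0(3) by simp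
      also have "\<dots> = Fm (Comp C a' a)" using fun_comp[OF Ff aM a'(1) a'(2)] by simp
      also have "\<dots> = Id D (Fo (Dom C a))" using a'(4) fun_id[OF Ff cat_dom[OF catC aM]] by simp
      finally have fb: "Fm b = Id D (Fo (Dom C a))" .
      have "(a, b) \<in> PP \<sigma> f0" unfolding PP_def
        using a(1) bM fb fun_obj[OF Ff cat_dom[OF catC aM]] cb ab by auto
      then show "a \<in> fst ` PP \<sigma> f0" by force
    qed
  qed
  show ?thesis using card_image[OF inj] img by simp
qed

lemma card_P_eq:
  assumes s: "\<sigma> \<in> S" and f0: "f0 \<in> \<sigma>" and f1: "f1 \<in> \<sigma>"
  shows "card (PP \<sigma> f0) = card (PP \<sigma> f1)"
proof -
  define good where "good \<rho> \<longleftrightarrow> (\<forall>b\<in>\<rho>. \<exists>y\<in>Obj D. Fm b = Id D y)" for \<rho>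
  have split: "PP \<sigma> f \<inter> (\<sigma>' \<times> \<rho>) = (if \<sigma>' = \<sigma> \<and> good \<rho> then factor_pairs C \<sigma> \<rho> f else {})"
    if s': "\<sigma>' \<in> S" and r: "\<rho> \<in> S" for \<sigma>' \<rho> f
  proof (cases "\<sigma>' = \<sigma> \<and> good \<rho>")
    case True
    then show ?thesis using qs_sub[OF Q1 r] unfolding PP_def factor_pairs_def good_def by auto
  next
    case False
    show ?thesis
    proof (cases "\<sigma>' = \<sigma>")
      case True
      then have ng: "\<not> good \<rho>" using False by blast
      have "\<not> (\<exists>y\<in>Obj D. Fm b = Id D y)" if "b \<in> \<rho>" for b
        using unital_block[OF FQ FB2 r that] ng unfolding good_def by blast
      then show ?thesis using False unfolding PP_def by auto
    next
      case False
      then have "\<sigma>' \<inter> \<sigma> = {}" using qs_disj[OF Q1 s' s] by blast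
      then show ?thesis using False unfolding PP_def by auto
    qed
  qed
  have cardP: "card (PP \<sigma> f) = (\<Sum>\<sigma>'\<in>S. \<Sum>\<rho>\<in>S. card (if \<sigma>' = \<sigma> \<and> good \<rho> then factor_pairs C \<sigma> \<rho> f else {}))" for f
  proof -
    have "card (PP \<sigma> f) = sum (\<lambda>_. 1) (PP \<sigma> f)" by (rule card_eq_sum)
    also have "\<dots> = (\<Sum>\<sigma>'\<in>S. \<Sum>\<rho>\<in>S. sum (\<lambda>_. 1) (PP \<sigma> f \<inter> (\<sigma>' \<times> \<rho>)))"
      by (rule sum_blocks2[OF Q1 finC]) (use qs_sub[OF Q1 s] in \<open>auto simp: PP_def\<close>)
    also have "\<dots> = (\<Sum>\<sigma>'\<in>S. \<Sum>\<rho>\<in>S. card (if \<sigma>' = \<sigma> \<and> good \<rho> then factor_pairs C \<sigma> \<rho> f else {}))"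
    proof (intro sum.cong refl)
      fix \<sigma>' \<rho> assume a: "\<sigma>' \<in> S" "\<rho> \<in> S"
      show "sum (\<lambda>_. 1) (PP \<sigma> f \<inter> (\<sigma>' \<times> \<rho>)) = card (if \<sigma>' = \<sigma> \<and> good \<rho> then factor_pairs C \<sigma> \<rho> f else {})"
        unfolding split[OF a] by (rule card_eq_sum[symmetric])
    qed
    finally show ?thesis .
  qed
  show ?thesis unfolding cardP
    by (intro sum.cong refl) (use fp_card[OF Q1 finC s _ s f0 f1] in auto)
qed

lemma nphi_spec:
  assumes s: "\<sigma> \<in> S"
  shows "nphi C D T Fo Fm \<sigma> > 0 \<and> (\<forall>x\<in>Obj C. \<forall>g\<in>blk T Fm \<sigma>. Cod D g = Fo x \<longrightarrow>
        card {f \<in> \<sigma>. Cod C f = x \<and> Fm f = g} = nphi C D T Fo Fm \<sigma>)"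
proof -
  define f0 where "f0 = (SOME f. f \<in> \<sigma>)"
  have f0: "f0 \<in> \<sigma>" unfolding f0_def using some_in[OF Q1 s] .
  define n0 where "n0 = card {f \<in> \<sigma>. Cod C f = Cod C f0 \<and> Fm f = Fm f0}"
  have fin: "finite {f \<in> \<sigma>. Cod C f = Cod C f0 \<and> Fm f = Fm f0}"
    using qs_sub[OF Q1 s] finC finite_subset by (metis (no_types, lifting) mem_Collect_eq subsetI subset_iff)
  have pos: "n0 > 0" unfolding n0_def using fin f0 by (metis (mono_tags, lifting) card_gt_0_iff empty_iff mem_Collect_eq)
  have n0P: "n0 = card (PP \<sigma> f0)" unfolding n0_def using card_A_P[OF s f0 refl refl] .
  have prp: "\<forall>x\<in>Obj C. \<forall>g\<in>blk T Fm \<sigma>. Cod D g = Fo x \<longrightarrow> card {f \<in> \<sigma>. Cod C f = x \<and> Fm f = g} = n0"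
  proof (intro ballI impI)
    fix x g assume x: "x \<in> Obj C" and g: "g \<in> blk T Fm \<sigma>" and c: "Cod D g = Fo x"
    obtain f1 where f1: "f1 \<in> \<sigma>" "Cod C f1 = x" "Fm f1 = g" using adm_lift[OF F x s g c] by blast
    show "card {f \<in> \<sigma>. Cod C f = x \<and> Fm f = g} = n0"
      using card_A_P[OF s f1] card_P_eq[OF s f1(1) f0] n0P by simp
  qed
  have "\<exists>n. n > 0 \<and> (\<forall>x\<in>Obj C. \<forall>g\<in>blk T Fm \<sigma>. Cod D g = Fo x \<longrightarrow> card {f \<in> \<sigma>. Cod C f = x \<and> Fm f = g} = n)"
    using pos prp by blast
  then show ?thesis unfolding nphi_def by (rule someI_ex)
qed

lemma nphi_card:
  assumes "\<sigma> \<in> S" "x \<in> Obj C" "g \<in> blk T Fm \<sigma>" "Cod D g = Fo x"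
  shows "card {f \<in> \<sigma>. Cod C f = x \<and> Fm f = g} = nphi C D T Fo Fm \<sigma>"
  using nphi_spec[OF assms(1)] assms(2-4) by blast

lemma Ksum:
  assumes bb: "bconst C S (b :: 'm1 \<Rightarrow> 'k::comm_ring_1)" and y: "y \<in> Obj C" and q: "Cod D q = Fo y"
  shows "(\<Sum>f\<in>{f \<in> Mor C. Cod C f = y \<and> Fm f = q}. b f) = Kmap C S D T Fo Fm b q"
proof -
  let ?N = "{f \<in> Mor C. Cod C f = y \<and> Fm f = q}"
  have "(\<Sum>f\<in>?N. b f) = (\<Sum>\<sigma>\<in>S. sum b (?N \<inter> \<sigma>))"
    by (rule sum_blocks[OF Q1 finC]) blast
  also have "\<dots> = Kmap C S D T Fo Fm b q" unfolding Kmap_apply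
  proof (rule sum.cong[OF refl])
    fix \<sigma> assume s: "\<sigma> \<in> S"
    show "sum b (?N \<inter> \<sigma>) = (if q \<in> blk T Fm \<sigma> then of_nat (nphi C D T Fo Fm \<sigma>) * b (SOME f. f \<in> \<sigma>) else 0)"
    proof (cases "q \<in> blk T Fm \<sigma>")
      case True
      have e: "?N \<inter> \<sigma> = {f \<in> \<sigma>. Cod C f = y \<and> Fm f = q}" using qs_sub[OF Q1 s] by blast
      have "sum b (?N \<inter> \<sigma>) = sum (\<lambda>_. b (SOME f. f \<in> \<sigma>)) {f \<in> \<sigma>. Cod C f = y \<and> Fm f = q}"
        unfolding e by (rule sum.cong[OF refl]) (use bconst_rep[OF bb s] in auto)
      also have "\<dots> = of_nat (nphi C D T Fo Fm \<sigma>) * b (SOME f. f \<in> \<sigma>)"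
        using nphi_card[OF s y True q] by simp
      finally show ?thesis using True by simp
    next
      case False
      then have "?N \<inter> \<sigma> = {}" using blk_img[OF FQ s] by blast
      then show ?thesis using False by simp
    qed
  qed
  finally show ?thesis .
qed


lemma finD: "finite (Mor D)" using fb_fin[OF FB2] .

lemma mult_at:
  assumes ba: "bconst C S (a :: 'm1 \<Rightarrow> 'k::comm_ring_1)" and bb: "bconst C S b"
    and x: "x \<in> Obj C" and g: "Cod D g = Fo x"
  shows "Kmap C S D T Fo Fm (cat_mult C a b) g
     = cat_mult D (Kmap C S D T Fo Fm a) (Kmap C S D T Fo Fm b) g"
proof -
  let ?Ka = "Kmap C S D T Fo Fm a" and ?Kb = "Kmap C S D T Fo Fm b"
  define H where "H = {h \<in> Mor C. Cod C h = x \<and> Fm h = g}"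
  define P1 where "P1 h = {(f1, f2). f1 \<in> Mor C \<and> f2 \<in> Mor C \<and> Dom C f1 = Cod C f2 \<and> Comp C f1 f2 = h}" for h
  define QQ where "QQ = {(f1, f2). f1 \<in> Mor C \<and> f2 \<in> Mor C \<and> Dom C f1 = Cod C f2 \<and> Cod C f1 = x
      \<and> Fm (Comp C f1 f2) = g}"
  define P2 where "P2 = {(p, q). p \<in> Mor D \<and> q \<in> Mor D \<and> Dom D p = Cod D q \<and> Comp D p q = g}"
  define X1 where "X1 p = {f1 \<in> Mor C. Cod C f1 = x \<and> Fm f1 = p}" for p
  define X2 where "X2 f1 q = {f2 \<in> Mor C. Cod C f2 = Dom C f1 \<and> Fm f2 = q}" for f1 q
  define FF where "FF = (\<lambda>(f1, f2). a f1 * b f2)"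
  have finMM: "finite (Mor C \<times> Mor C)" using finC by simp
  have finQQ: "finite QQ" by (rule finite_subset[OF _ finMM]) (auto simp: QQ_def)
  have finH: "finite H" by (rule finite_subset[OF _ finC]) (auto simp: H_def)
  have finP1: "finite (P1 h)" for h by (rule finite_subset[OF _ finMM]) (auto simp: P1_def)
  have finP2: "finite P2" by (rule finite_subset[OF _ finite_cartesian_product[OF finD finD]]) (auto simp: P2_def)
  have "Kmap C S D T Fo Fm (cat_mult C a b) g = (\<Sum>h\<in>H. cat_mult C a b h)"
    unfolding H_def using Ksum[OF cat_mult_bconst[OF Q1 finC ba bb] x g] by simp
  also have "\<dots> = (\<Sum>h\<in>H. sum FF (P1 h))"
    unfolding cat_mult_def P1_def FF_def by simp
  also have "\<dots> = sum FF (\<Union>h\<in>H. P1 h)"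
    by (rule sum.UNION_disjoint[symmetric]) (use finH finP1 in \<open>auto simp: P1_def\<close>)
  also have "(\<Union>h\<in>H. P1 h) = QQ"
  proof
    show "(\<Union>h\<in>H. P1 h) \<subseteq> QQ"
      using cat_comp_cod[OF catC] by (fastforce simp: H_def P1_def QQ_def)
    show "QQ \<subseteq> (\<Union>h\<in>H. P1 h)"
    proof
      fix z assume "z \<in> QQ"
      then obtain f1 f2 where z: "z = (f1, f2)" "f1 \<in> Mor C" "f2 \<in> Mor C" "Dom C f1 = Cod C f2"
        "Cod C f1 = x" "Fm (Comp C f1 f2) = g" unfolding QQ_def by blast
      have "Comp C f1 f2 \<in> H" unfolding H_def
        using z cat_comp[OF catC z(3) z(2) z(4)] cat_comp_cod[OF catC z(3) z(2) z(4)] by simp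
      moreover have "z \<in> P1 (Comp C f1 f2)" unfolding P1_def using z by simp
      ultimately show "z \<in> (\<Union>h\<in>H. P1 h)" by blast
    qed
  qed
  also have "sum FF QQ = (\<Sum>pq\<in>P2. sum FF {z \<in> QQ. (\<lambda>(f1, f2). (Fm f1, Fm f2)) z = pq})"
  proof (rule sum.group[symmetric, OF finQQ finP2])
    show "(\<lambda>(f1, f2). (Fm f1, Fm f2)) ` QQ \<subseteq> P2"
    proof
      fix w assume "w \<in> (\<lambda>(f1, f2). (Fm f1, Fm f2)) ` QQ"
      then obtain f1 f2 where z: "w = (Fm f1, Fm f2)" "f1 \<in> Mor C" "f2 \<in> Mor C" "Dom C f1 = Cod C f2"
        "Cod C f1 = x" "Fm (Comp C f1 f2) = g" unfolding QQ_def by force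
      show "w \<in> P2" unfolding P2_def using z fun_mor[OF Ff] fun_dom[OF Ff] fun_cod[OF Ff] fun_comp[OF Ff z(3) z(2) z(4)]
        by auto
    qed
  qed
  also have "\<dots> = (\<Sum>pq\<in>P2. ?Ka (fst pq) * ?Kb (snd pq))"
  proof (rule sum.cong[OF refl])
    fix pq assume "pq \<in> P2"
    then obtain p q where pq: "pq = (p, q)" "p \<in> Mor D" "q \<in> Mor D" "Dom D p = Cod D q" "Comp D p q = g"
      unfolding P2_def by blast
    have cp: "Cod D p = Fo x" using cat_comp_cod[OF catD pq(3) pq(2) pq(4)] pq(5) g by simp
    have e: "{z \<in> QQ. (\<lambda>(f1, f2). (Fm f1, Fm f2)) z = pq} = Sigma (X1 p) (\<lambda>f1. X2 f1 q)"
    proof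
      show "{z \<in> QQ. (\<lambda>(f1, f2). (Fm f1, Fm f2)) z = pq} \<subseteq> Sigma (X1 p) (\<lambda>f1. X2 f1 q)"
        using pq(1) by (auto simp: QQ_def X1_def X2_def)
      show "Sigma (X1 p) (\<lambda>f1. X2 f1 q) \<subseteq> {z \<in> QQ. (\<lambda>(f1, f2). (Fm f1, Fm f2)) z = pq}"
      proof
        fix z assume "z \<in> Sigma (X1 p) (\<lambda>f1. X2 f1 q)"
        then obtain f1 f2 where z: "z = (f1, f2)" "f1 \<in> Mor C" "Cod C f1 = x" "Fm f1 = p"
          "f2 \<in> Mor C" "Cod C f2 = Dom C f1" "Fm f2 = q" unfolding X1_def X2_def by blast
        have "Fm (Comp C f1 f2) = g" using fun_comp[OF Ff z(5) z(2) z(6)[symmetric]] z pq(5) by simp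
        then show "z \<in> {z \<in> QQ. (\<lambda>(f1, f2). (Fm f1, Fm f2)) z = pq}"
          using z pq(1) unfolding QQ_def by auto
      qed
    qed
    have inner: "(\<Sum>f2\<in>X2 f1 q. b f2) = ?Kb q" if "f1 \<in> X1 p" for f1
    proof -
      have f1: "f1 \<in> Mor C" "Fm f1 = p" using that unfolding X1_def by auto
      have "Cod D q = Fo (Dom C f1)" using pq(4) fun_dom[OF Ff f1(1)] f1 by simp
      then show ?thesis unfolding X2_def using Ksum[OF bb cat_dom[OF catC f1(1)]] by simp
    qed
    have "sum FF (Sigma (X1 p) (\<lambda>f1. X2 f1 q)) = (\<Sum>f1\<in>X1 p. \<Sum>f2\<in>X2 f1 q. a f1 * b f2)"
      unfolding FF_def
      by (rule sum.Sigma[symmetric]) (auto simp: X1_def X2_def intro: finite_subset[OF _ finC])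
    also have "\<dots> = (\<Sum>f1\<in>X1 p. a f1 * ?Kb q)"
      by (rule sum.cong[OF refl]) (simp add: sum_distrib_left[symmetric] inner)
    also have "\<dots> = (\<Sum>f1\<in>X1 p. a f1) * ?Kb q" by (simp add: sum_distrib_right)
    also have "\<dots> = ?Ka p * ?Kb q" unfolding X1_def using Ksum[OF ba x cp] by simp
    finally show "sum FF {z \<in> QQ. (\<lambda>(f1, f2). (Fm f1, Fm f2)) z = pq} = ?Ka (fst pq) * ?Kb (snd pq)"
      using e pq(1) by simp
  qed
  also have "\<dots> = cat_mult D ?Ka ?Kb g"
    unfolding cat_mult_def P2_def by (simp add: split_beta)
  finally show ?thesis .
qed


lemma mult_hom:
  assumes ba: "bconst C S (a :: 'm1 \<Rightarrow> 'k::comm_ring_1)" and bb: "bconst C S b"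
  shows "Kmap C S D T Fo Fm (cat_mult C a b) = cat_mult D (Kmap C S D T Fo Fm a) (Kmap C S D T Fo Fm b)"
proof
  fix g
  let ?L = "Kmap C S D T Fo Fm (cat_mult C a b)"
  let ?R = "cat_mult D (Kmap C S D T Fo Fm a) (Kmap C S D T Fo Fm b)"
  have bL: "bconst D T ?L" by (rule Kmap_bconst[OF FQ])
  have bR: "bconst D T ?R" by (rule cat_mult_bconst[OF Q2 finD Kmap_bconst[OF FQ] Kmap_bconst[OF FQ]])
  show "?L g = ?R g"
  proof (cases "g \<in> Mor D")
    case False then show ?thesis using bconst_out[OF bL False] bconst_out[OF bR False] by simp
  next
    case True
    then obtain \<tau> where t: "\<tau> \<in> T" "g \<in> \<tau>" using qs_ex_block[OF Q2] by blast
    show ?thesis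
    proof (cases "\<exists>x\<in>Obj C. \<exists>g'\<in>\<tau>. Cod D g' = Fo x")
      case True
      then obtain x g' where x: "x \<in> Obj C" "g' \<in> \<tau>" "Cod D g' = Fo x" by blast
      have "?L g = ?L g'" using bconst_eq[OF bL t(1) t(2) x(2)] .
      also have "\<dots> = ?R g'" using mult_at[OF ba bb x(1) x(3)] .
      also have "\<dots> = ?R g" using bconst_eq[OF bR t(1) x(2) t(2)] .
      finally show ?thesis .
    next
      case False
      note nreach = False
      have key: False if s: "\<sigma> \<in> S" and p: "p \<in> blk T Fm \<sigma>" and cp: "Cod D p = Cod D g" for \<sigma> p
      proof -
        obtain f where f: "f \<in> \<sigma>" using qs_ne[OF Q1 s] by blast
        have fM: "f \<in> Mor C" using qs_sub[OF Q1 s] f by blast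
        have pM: "p \<in> Mor D" using qs_sub[OF Q2 blk_in[OF FQ s]] p by blast
        obtain I where I: "I \<in> T" "Id D (Cod D p) \<in> I"
          using qs_ex_block[OF Q2 cat_id[OF catD cat_cod[OF catD pM]]] by blast
        have "Id D (Cod D (Fm f)) \<in> I" by (rule id_class[OF FB2 blk_in[OF FQ s] p blk_img[OF FQ s f] I])
        then obtain g' where "g' \<in> \<tau>" "Cod D g' = Cod D (Fm f)"
          using reach[OF FB2 t(1) t(2) cat_cod[OF catD fun_mor[OF Ff fM]] I(1)] I(2) cp by auto
        then show False using nreach fun_cod[OF Ff fM] cat_cod[OF catC fM] by auto
      qed
      have L0: "?L g = 0" unfolding Kmap_apply
        by (rule sum.neutral) (use key in auto)
      have R0: "?R g = 0" unfolding cat_mult_def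
      proof (rule sum.neutral, rule ballI)
        fix z assume "z \<in> {(p, q). p \<in> Mor D \<and> q \<in> Mor D \<and> Dom D p = Cod D q \<and> Comp D p q = g}"
        then obtain p q where z: "z = (p, q)" "p \<in> Mor D" "q \<in> Mor D" "Dom D p = Cod D q" "Comp D p q = g"
          by force
        have cp: "Cod D p = Cod D g" using cat_comp_cod[OF catD z(3) z(2) z(4)] z(5) by simp
        have "Kmap C S D T Fo Fm a p = 0" using Kmap_nz[of C S D T Fo Fm a p] key cp by blast
        then show "(\<lambda>(f, g). Kmap C S D T Fo Fm a f * Kmap C S D T Fo Fm b g) z = 0" using z by simp
      qed
      show ?thesis using L0 R0 by simp
    qed
  qed
qed

end

lemma Kmap_id:
  assumes FB: "finite_basic C S" and ba: "bconst C S (a :: 'm \<Rightarrow> 'k::comm_ring_1)"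
  shows "Kmap C S C S id id a = a"
proof
  fix g
  have Q: "quasi_schemoid C S" using fb_qs[OF FB] .
  have cat: "category C" using qs_cat[OF Q] .
  note I = id_admissible[OF Q]
  have n1: "nphi C C S id id \<sigma> = 1" if s: "\<sigma> \<in> S" for \<sigma>
  proof -
    define f0 where "f0 = (SOME f. f \<in> \<sigma>)"
    have f0: "f0 \<in> \<sigma>" unfolding f0_def using some_in[OF Q s] .
    have f0M: "f0 \<in> Mor C" using qs_sub[OF Q s] f0 by blast
    have "card {f \<in> \<sigma>. Cod C f = Cod C f0 \<and> id f = f0} = nphi C C S id id \<sigma>"
      by (rule nphi_card[OF I(1) FB FB s cat_cod[OF cat f0M]]) (use f0 I(2)[OF s] in auto)
    moreover have "{f \<in> \<sigma>. Cod C f = Cod C f0 \<and> id f = f0} = {f0}" using f0 by auto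
    ultimately show ?thesis by simp
  qed
  have "Kmap C S C S id id a g = (\<Sum>\<sigma>\<in>S. if g \<in> \<sigma> then a (SOME f. f \<in> \<sigma>) else 0)"
    unfolding Kmap_apply by (rule sum.cong[OF refl]) (simp add: n1 I(2))
  also have "\<dots> = a g"
  proof (cases "g \<in> Mor C")
    case True
    then obtain \<sigma>0 where s0: "\<sigma>0 \<in> S" "g \<in> \<sigma>0" using qs_ex_block[OF Q] by blast
    have "(\<Sum>\<sigma>\<in>S. if g \<in> \<sigma> then a (SOME f. f \<in> \<sigma>) else 0) = (\<Sum>\<sigma>\<in>S. if \<sigma> = \<sigma>0 then a (SOME f. f \<in> \<sigma>) else 0)"
    proof (rule sum.cong[OF refl])
      fix \<sigma> assume s: "\<sigma> \<in> S"
      have "g \<in> \<sigma> \<longleftrightarrow> \<sigma> = \<sigma>0" using qs_disj[OF Q s s0(1) _ s0(2)] s0(2) by blast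
      then show "(if g \<in> \<sigma> then a (SOME f. f \<in> \<sigma>) else 0) = (if \<sigma> = \<sigma>0 then a (SOME f. f \<in> \<sigma>) else 0)" by simp
    qed
    also have "\<dots> = a (SOME f. f \<in> \<sigma>0)" using s0 qs_finite_S[OF Q fb_fin[OF FB]] by simp
    also have "\<dots> = a g" using bconst_rep[OF ba s0] by simp
    finally show ?thesis .
  next
    case False
    then have "(\<Sum>\<sigma>\<in>S. if g \<in> \<sigma> then a (SOME f. f \<in> \<sigma>) else 0) = 0"
      by (intro sum.neutral) (use qs_sub[OF Q] in auto)
    then show ?thesis using bconst_out[OF ba False] by simp
  qed
  finally show "Kmap C S C S id id a g = a g" .
qed

lemma Kmap_comp:
  assumes F: "admissible C1 S1 C2 S2 Fo Fm" and G: "admissible C2 S2 C3 S3 Go Gm"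
    and FB1: "finite_basic C1 S1" and FB2: "finite_basic C2 S2" and FB3: "finite_basic C3 S3"
    and ba: "bconst C1 S1 (a :: 'm1 \<Rightarrow> 'k::comm_ring_1)"
  shows "Kmap C1 S1 C3 S3 (Go \<circ> Fo) (Gm \<circ> Fm) a = Kmap C2 S2 C3 S3 Go Gm (Kmap C1 S1 C2 S2 Fo Fm a)"
proof
  fix g
  have H: "admissible C1 S1 C3 S3 (Go \<circ> Fo) (Gm \<circ> Fm)" using comp_admissible(1)[OF F G] .
  have bb: "\<sigma> \<in> S1 \<Longrightarrow> blk S3 (Gm \<circ> Fm) \<sigma> = blk S3 Gm (blk S2 Fm \<sigma>)" for \<sigma>
    using comp_admissible(2)[OF F G] .
  have Q1: "quasi_schemoid C1 S1" using fb_qs[OF FB1] .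
  have Q2: "quasi_schemoid C2 S2" using fb_qs[OF FB2] .
  have Q3: "quasi_schemoid C3 S3" using fb_qs[OF FB3] .
  have FQ: "qs_morphism C1 S1 C2 S2 Fo Fm" using adm_qsm[OF F] .
  have GQ: "qs_morphism C2 S2 C3 S3 Go Gm" using adm_qsm[OF G] .
  have HQ: "qs_morphism C1 S1 C3 S3 (Go \<circ> Fo) (Gm \<circ> Fm)" using adm_qsm[OF H] .
  have Ff: "is_functor C1 C2 Fo Fm" using qsm_fun[OF FQ] .
  have Gf: "is_functor C2 C3 Go Gm" using qsm_fun[OF GQ] .
  have cat1: "category C1" using qs_cat[OF Q1] .
  have finC1: "finite (Mor C1)" using fb_fin[OF FB1] .
  have finC2: "finite (Mor C2)" using fb_fin[OF FB2] .
  let ?K = "Kmap C1 S1 C2 S2 Fo Fm a"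
  let ?L = "Kmap C1 S1 C3 S3 (Go \<circ> Fo) (Gm \<circ> Fm) a"
  let ?R = "Kmap C2 S2 C3 S3 Go Gm ?K"
  have bK: "bconst C2 S2 ?K" by (rule Kmap_bconst[OF FQ])
  have bL: "bconst C3 S3 ?L" by (rule Kmap_bconst[OF HQ])
  have bR: "bconst C3 S3 ?R" by (rule Kmap_bconst[OF GQ])
  show "?L g = ?R g"
  proof (cases "g \<in> Mor C3")
    case False then show ?thesis using bconst_out[OF bL False] bconst_out[OF bR False] by simp
  next
    case True
    then obtain \<tau> where t: "\<tau> \<in> S3" "g \<in> \<tau>" using qs_ex_block[OF Q3] by blast
    show ?thesis
    proof (cases "\<exists>x\<in>Obj C1. \<exists>g'\<in>\<tau>. Cod C3 g' = Go (Fo x)")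
      case True
      then obtain x g' where x: "x \<in> Obj C1" "g' \<in> \<tau>" "Cod C3 g' = Go (Fo x)" by blast
      have Fx: "Fo x \<in> Obj C2" using fun_obj[OF Ff x(1)] .
      let ?N1 = "{h \<in> Mor C1. Cod C1 h = x \<and> (Gm \<circ> Fm) h = g'}"
      let ?N2 = "{h2 \<in> Mor C2. Cod C2 h2 = Fo x \<and> Gm h2 = g'}"
      have "?L g' = (\<Sum>h\<in>?N1. a h)"
        using Ksum[OF H FB1 FB3 ba x(1)] x(3) by simp
      also have "\<dots> = (\<Sum>h2\<in>?N2. sum a {h \<in> ?N1. Fm h = h2})"
      proof (rule sum.group[symmetric])
        show "finite ?N1" by (rule finite_subset[OF _ finC1]) blast
        show "finite ?N2" by (rule finite_subset[OF _ finC2]) blast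
        show "Fm ` ?N1 \<subseteq> ?N2" using fun_mor[OF Ff] fun_cod[OF Ff] by auto
      qed
      also have "\<dots> = (\<Sum>h2\<in>?N2. ?K h2)"
      proof (rule sum.cong[OF refl])
        fix h2 assume h2: "h2 \<in> ?N2"
        have e: "{h \<in> ?N1. Fm h = h2} = {h \<in> Mor C1. Cod C1 h = x \<and> Fm h = h2}" using h2 by auto
        show "sum a {h \<in> ?N1. Fm h = h2} = ?K h2" unfolding e
          using Ksum[OF F FB1 FB2 ba x(1)] h2 by simp
      qed
      also have "\<dots> = ?R g'" using Ksum[OF G FB2 FB3 bK Fx] x(3) by simp
      finally have "?L g' = ?R g'" .
      then show ?thesis using bconst_eq[OF bL t(1) t(2) x(2)] bconst_eq[OF bR t(1) t(2) x(2)] by simp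
    next
      case False
      note nreach = False
      have key: False if s: "\<sigma> \<in> S1" and gs: "g \<in> blk S3 (Gm \<circ> Fm) \<sigma>" for \<sigma>
      proof -
        obtain f where f: "f \<in> \<sigma>" using qs_ne[OF Q1 s] by blast
        have fM: "f \<in> Mor C1" using qs_sub[OF Q1 s] f by blast
        have "blk S3 (Gm \<circ> Fm) \<sigma> = \<tau>" using qs_disj[OF Q3 blk_in[OF HQ s] t(1) gs t(2)] .
        then have "(Gm \<circ> Fm) f \<in> \<tau>" using blk_img[OF HQ s f] by simp
        moreover have "Cod C3 ((Gm \<circ> Fm) f) = Go (Fo (Cod C1 f))"
          using fun_cod[OF Gf fun_mor[OF Ff fM]] fun_cod[OF Ff fM] by simp
        ultimately show False using nreach cat_cod[OF cat1 fM] by blast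
      qed
      have L0: "?L g = 0" unfolding Kmap_apply by (rule sum.neutral) (use key in auto)
      have R0: "?R g = 0" unfolding Kmap_apply[of C2 S2 C3 S3 Go Gm]
      proof (rule sum.neutral, rule ballI)
        fix \<tau>2 assume t2: "\<tau>2 \<in> S2"
        show "(if g \<in> blk S3 Gm \<tau>2 then of_nat (nphi C2 C3 S3 Go Gm \<tau>2) * ?K (SOME f. f \<in> \<tau>2) else 0) = 0"
        proof (cases "g \<in> blk S3 Gm \<tau>2 \<and> ?K (SOME f. f \<in> \<tau>2) \<noteq> 0")
          case True
          then obtain \<sigma> where s: "\<sigma> \<in> S1" "(SOME f. f \<in> \<tau>2) \<in> blk S2 Fm \<sigma>"
            using Kmap_nz[of C1 S1 C2 S2 Fo Fm a] by blast
          have "blk S2 Fm \<sigma> = \<tau>2" using qs_disj[OF Q2 blk_in[OF FQ s(1)] t2 s(2) some_in[OF Q2 t2]] .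
          then have "g \<in> blk S3 (Gm \<circ> Fm) \<sigma>" using True bb[OF s(1)] by simp
          then show ?thesis using key[OF s(1)] by blast
        next
          case False then show ?thesis by auto
        qed
      qed
      show ?thesis using L0 R0 by simp
    qed
  qed
qed


lemma part4:
  assumes FB1: "finite_basic C1 S1" and FB2: "finite_basic C2 S2" and F: "admissible C1 S1 C2 S2 Fo Fm"
  shows "(\<forall>\<pi>\<in>S1. Kmap C1 S1 C2 S2 Fo Fm (sblock \<pi> :: 'm1 \<Rightarrow> 'k::comm_ring_1)
            = (\<lambda>h. of_nat (nphi C1 C2 S2 Fo Fm \<pi>) * sblock (blk S2 Fm \<pi>) h)) \<and>
        (\<forall>a\<in>sch_alg C1 S1. Kmap C1 S1 C2 S2 Fo Fm a \<in> (sch_alg C2 S2 :: ('m2 \<Rightarrow> 'k) set)) \<and>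
        (\<forall>a\<in>(sch_alg C1 S1 :: ('m1 \<Rightarrow> 'k) set). \<forall>b\<in>sch_alg C1 S1.
            Kmap C1 S1 C2 S2 Fo Fm (\<lambda>h. a h + b h)
              = (\<lambda>h. Kmap C1 S1 C2 S2 Fo Fm a h + Kmap C1 S1 C2 S2 Fo Fm b h) \<and>
            Kmap C1 S1 C2 S2 Fo Fm (cat_mult C1 a b)
              = cat_mult C2 (Kmap C1 S1 C2 S2 Fo Fm a) (Kmap C1 S1 C2 S2 Fo Fm b)) \<and>
        (\<forall>(c::'k) a. a \<in> sch_alg C1 S1 \<longrightarrow>
            Kmap C1 S1 C2 S2 Fo Fm (\<lambda>h. c * a h) = (\<lambda>h. c * Kmap C1 S1 C2 S2 Fo Fm a h))"
proof -
  have Q1: "quasi_schemoid C1 S1" using fb_qs[OF FB1] .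
  have Q2: "quasi_schemoid C2 S2" using fb_qs[OF FB2] .
  have fS1: "finite S1" using qs_finite_S[OF Q1 fb_fin[OF FB1]] .
  have fS2: "finite S2" using qs_finite_S[OF Q2 fb_fin[OF FB2]] .
  have FQ: "qs_morphism C1 S1 C2 S2 Fo Fm" using adm_qsm[OF F] .
  note iff1 = sch_alg_iff[OF Q1 fS1] and iff2 = sch_alg_iff[OF Q2 fS2]
  show ?thesis
  proof (intro conjI ballI allI impI)
    fix \<pi> assume p: "\<pi> \<in> S1"
    show "Kmap C1 S1 C2 S2 Fo Fm (sblock \<pi> :: 'm1 \<Rightarrow> 'k)
            = (\<lambda>h. of_nat (nphi C1 C2 S2 Fo Fm \<pi>) * sblock (blk S2 Fm \<pi>) h)"
      by (rule Kmap_sblock[OF FQ fS1 p])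
  next
    fix a :: "'m1 \<Rightarrow> 'k" assume "a \<in> sch_alg C1 S1"
    show "Kmap C1 S1 C2 S2 Fo Fm a \<in> (sch_alg C2 S2 :: ('m2 \<Rightarrow> 'k) set)"
      unfolding iff2 by (rule Kmap_bconst[OF FQ])
  next
    fix a b :: "'m1 \<Rightarrow> 'k" assume a: "a \<in> sch_alg C1 S1" and b: "b \<in> sch_alg C1 S1"
    show "Kmap C1 S1 C2 S2 Fo Fm (\<lambda>h. a h + b h)
              = (\<lambda>h. Kmap C1 S1 C2 S2 Fo Fm a h + Kmap C1 S1 C2 S2 Fo Fm b h)"
      by (rule Kmap_add)
    show "Kmap C1 S1 C2 S2 Fo Fm (cat_mult C1 a b)
              = cat_mult C2 (Kmap C1 S1 C2 S2 Fo Fm a) (Kmap C1 S1 C2 S2 Fo Fm b)"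
      using mult_hom[OF F FB1 FB2] a b unfolding iff1 by blast
  next
    fix c :: 'k and a :: "'m1 \<Rightarrow> 'k"
    show "Kmap C1 S1 C2 S2 Fo Fm (\<lambda>h. c * a h) = (\<lambda>h. c * Kmap C1 S1 C2 S2 Fo Fm a h)"
      by (rule Kmap_scale)
  qed
qed

theorem theorem6p9:
  fixes C1 :: "('o1, 'm1) cat" and S1 :: "'m1 set set"
    and C2 :: "('o2, 'm2) cat" and S2 :: "'m2 set set"
    and C3 :: "('o3, 'm3) cat" and S3 :: "'m3 set set"
    and Fo :: "'o1 \<Rightarrow> 'o2" and Fm :: "'m1 \<Rightarrow> 'm2"
    and Go :: "'o2 \<Rightarrow> 'o3" and Gm :: "'m2 \<Rightarrow> 'm3"
  shows
    \<comment> \<open>composites of admissible morphisms are admissible\<close>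
    "(admissible C1 S1 C2 S2 Fo Fm \<and> admissible C2 S2 C3 S3 Go Gm
        \<longrightarrow> admissible C1 S1 C3 S3 (Go \<circ> Fo) (Gm \<circ> Fm))
   \<and> \<comment> \<open>identities are admissible (so B is a category)\<close>
     (quasi_schemoid C1 S1 \<longrightarrow> admissible C1 S1 C1 S1 id id)
   \<and> \<comment> \<open>K(C,S) is a (possibly nonunital) K-subalgebra of the category algebra\<close>
     (finite_basic C1 S1 \<longrightarrow>
        ((\<lambda>h. 0) :: 'm1 \<Rightarrow> 'k::comm_ring_1) \<in> sch_alg C1 S1 \<and>
        (\<forall>a\<in>(sch_alg C1 S1 :: ('m1 \<Rightarrow> 'k) set). \<forall>b\<in>sch_alg C1 S1.
            (\<lambda>h. a h + b h) \<in> sch_alg C1 S1 \<and> cat_mult C1 a b \<in> sch_alg C1 S1) \<and>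
        (\<forall>(c::'k) a. a \<in> sch_alg C1 S1 \<longrightarrow> (\<lambda>h. c * a h) \<in> sch_alg C1 S1))
   \<and> \<comment> \<open>K(phi) is a K-algebra homomorphism K(C1,S1) -> K(C2,S2) with s_pi |-> n_pi s_phi(pi)\<close>
     (finite_basic C1 S1 \<and> finite_basic C2 S2 \<and> admissible C1 S1 C2 S2 Fo Fm \<longrightarrow>
        (\<forall>\<pi>\<in>S1. Kmap C1 S1 C2 S2 Fo Fm (sblock \<pi> :: 'm1 \<Rightarrow> 'k)
            = (\<lambda>h. of_nat (nphi C1 C2 S2 Fo Fm \<pi>) * sblock (blk S2 Fm \<pi>) h)) \<and>
        (\<forall>a\<in>sch_alg C1 S1. Kmap C1 S1 C2 S2 Fo Fm a \<in> (sch_alg C2 S2 :: ('m2 \<Rightarrow> 'k) set)) \<and>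
        (\<forall>a\<in>(sch_alg C1 S1 :: ('m1 \<Rightarrow> 'k) set). \<forall>b\<in>sch_alg C1 S1.
            Kmap C1 S1 C2 S2 Fo Fm (\<lambda>h. a h + b h)
              = (\<lambda>h. Kmap C1 S1 C2 S2 Fo Fm a h + Kmap C1 S1 C2 S2 Fo Fm b h) \<and>
            Kmap C1 S1 C2 S2 Fo Fm (cat_mult C1 a b)
              = cat_mult C2 (Kmap C1 S1 C2 S2 Fo Fm a) (Kmap C1 S1 C2 S2 Fo Fm b)) \<and>
        (\<forall>(c::'k) a. a \<in> sch_alg C1 S1 \<longrightarrow>
            Kmap C1 S1 C2 S2 Fo Fm (\<lambda>h. c * a h) = (\<lambda>h. c * Kmap C1 S1 C2 S2 Fo Fm a h)))
   \<and> \<comment> \<open>K(id) = id\<close>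
     (finite_basic C1 S1 \<longrightarrow>
        (\<forall>a\<in>(sch_alg C1 S1 :: ('m1 \<Rightarrow> 'k) set). Kmap C1 S1 C1 S1 id id a = a))
   \<and> \<comment> \<open>K(psi o phi) = K(psi) o K(phi)\<close>
     (finite_basic C1 S1 \<and> finite_basic C2 S2 \<and> finite_basic C3 S3 \<and>
      admissible C1 S1 C2 S2 Fo Fm \<and> admissible C2 S2 C3 S3 Go Gm \<longrightarrow>
        (\<forall>a\<in>(sch_alg C1 S1 :: ('m1 \<Rightarrow> 'k) set).
            Kmap C1 S1 C3 S3 (Go \<circ> Fo) (Gm \<circ> Fm) a
              = Kmap C2 S2 C3 S3 Go Gm (Kmap C1 S1 C2 S2 Fo Fm a)))"
proof (intro conjI impI)
  assume "admissible C1 S1 C2 S2 Fo Fm \<and> admissible C2 S2 C3 S3 Go Gm"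
  then show "admissible C1 S1 C3 S3 (Go \<circ> Fo) (Gm \<circ> Fm)" using comp_admissible(1) by blast
next
  assume "quasi_schemoid C1 S1"
  then show "admissible C1 S1 C1 S1 id id" by (rule id_admissible(1))
next
  assume "finite_basic C1 S1"
  note P = part3[OF this, where 'k='k]
  show "((\<lambda>h. 0) :: 'm1 \<Rightarrow> 'k::comm_ring_1) \<in> sch_alg C1 S1" using P by blast
  show "\<forall>a\<in>(sch_alg C1 S1 :: ('m1 \<Rightarrow> 'k) set). \<forall>b\<in>sch_alg C1 S1.
            (\<lambda>h. a h + b h) \<in> sch_alg C1 S1 \<and> cat_mult C1 a b \<in> sch_alg C1 S1" using P by blast
  show "\<forall>(c::'k) a. a \<in> sch_alg C1 S1 \<longrightarrow> (\<lambda>h. c * a h) \<in> sch_alg C1 S1" using P by blast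
next
  assume "finite_basic C1 S1 \<and> finite_basic C2 S2 \<and> admissible C1 S1 C2 S2 Fo Fm"
  then have A: "finite_basic C1 S1" "finite_basic C2 S2" "admissible C1 S1 C2 S2 Fo Fm" by auto
  note P = part4[OF A, where 'k='k]
  show "\<forall>\<pi>\<in>S1. Kmap C1 S1 C2 S2 Fo Fm (sblock \<pi> :: 'm1 \<Rightarrow> 'k)
            = (\<lambda>h. of_nat (nphi C1 C2 S2 Fo Fm \<pi>) * sblock (blk S2 Fm \<pi>) h)" using P by (elim conjE)
  show "\<forall>a\<in>sch_alg C1 S1. Kmap C1 S1 C2 S2 Fo Fm a \<in> (sch_alg C2 S2 :: ('m2 \<Rightarrow> 'k) set)" using P by (elim conjE)
  show "\<forall>a\<in>(sch_alg C1 S1 :: ('m1 \<Rightarrow> 'k) set). \<forall>b\<in>sch_alg C1 S1.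
            Kmap C1 S1 C2 S2 Fo Fm (\<lambda>h. a h + b h)
              = (\<lambda>h. Kmap C1 S1 C2 S2 Fo Fm a h + Kmap C1 S1 C2 S2 Fo Fm b h) \<and>
            Kmap C1 S1 C2 S2 Fo Fm (cat_mult C1 a b)
              = cat_mult C2 (Kmap C1 S1 C2 S2 Fo Fm a) (Kmap C1 S1 C2 S2 Fo Fm b)" using P by (elim conjE)
  show "\<forall>(c::'k) a. a \<in> sch_alg C1 S1 \<longrightarrow>
            Kmap C1 S1 C2 S2 Fo Fm (\<lambda>h. c * a h) = (\<lambda>h. c * Kmap C1 S1 C2 S2 Fo Fm a h)" using P by (elim conjE)
next
  assume FB: "finite_basic C1 S1"
  have Q: "quasi_schemoid C1 S1" using fb_qs[OF FB] .
  note iff = sch_alg_iff[OF Q qs_finite_S[OF Q fb_fin[OF FB]]]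
  show "\<forall>a\<in>(sch_alg C1 S1 :: ('m1 \<Rightarrow> 'k) set). Kmap C1 S1 C1 S1 id id a = a"
  proof
    fix a :: "'m1 \<Rightarrow> 'k" assume "a \<in> sch_alg C1 S1"
    then show "Kmap C1 S1 C1 S1 id id a = a" using Kmap_id[OF FB] iff by blast
  qed
next
  assume "finite_basic C1 S1 \<and> finite_basic C2 S2 \<and> finite_basic C3 S3 \<and>
      admissible C1 S1 C2 S2 Fo Fm \<and> admissible C2 S2 C3 S3 Go Gm"
  then have A: "finite_basic C1 S1" "finite_basic C2 S2" "finite_basic C3 S3"
      "admissible C1 S1 C2 S2 Fo Fm" "admissible C2 S2 C3 S3 Go Gm" by auto
  have Q: "quasi_schemoid C1 S1" using fb_qs[OF A(1)] .
  note iff = sch_alg_iff[OF Q qs_finite_S[OF Q fb_fin[OF A(1)]]]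
  show "\<forall>a\<in>(sch_alg C1 S1 :: ('m1 \<Rightarrow> 'k) set).
            Kmap C1 S1 C3 S3 (Go \<circ> Fo) (Gm \<circ> Fm) a
              = Kmap C2 S2 C3 S3 Go Gm (Kmap C1 S1 C2 S2 Fo Fm a)"
  proof
    fix a :: "'m1 \<Rightarrow> 'k" assume "a \<in> sch_alg C1 S1"
    then show "Kmap C1 S1 C3 S3 (Go \<circ> Fo) (Gm \<circ> Fm) a = Kmap C2 S2 C3 S3 Go Gm (Kmap C1 S1 C2 S2 Fo Fm a)"
      using Kmap_comp[OF A(4) A(5) A(1) A(2) A(3)] iff by blast
  qed
qed

end
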